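(* For every $n\in\mathbb{Z}_{>0}$ there is a bijection \[ \mathrm{E}_n\simeq\bigsqcup_{d\mid n}\mathrm{E}^{\mathrm{p}}_{n/d}\times\Lambda_d . \]
   Context: A square-tiled surface with $n$ squares is a connected surface obtained from $n$ unit squares by identifying, via translations, each top side with some bottom side and each right side with some left side (a connected degree-$n$ cover of $\mathbb{C}/(\mathbb{Z}+i\mathbb{Z})$ branched over one point), counted up to translation isomorphism. $\mathcal{H}(2)$: genus $2$ surfaces with a single cone point, of angle $6\pi$. $\mathrm{E}_n$ is the set of square-tiled surfaces with $n$ squares in $\mathcal{H}(2)$; $\mathrm{E}_n^{\mathrm{p}}$ its subset of primitive surfaces, i.e. those whose lattice of periods (the subgroup of $\mathbb{Z}^2$ generated by holonomy vectors of saddle connections) equals $\mathbb{Z}^2$. $\Lambda_d$ is the set of sublattices of $\mathbb{Z}+i\mathbb{Z}$ of index $d$. *)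

theory Defs
  imports Main "HOL-Combinatorics.Permutations"
begin

text \<open>Combinatorial model of square-tiled surfaces with n squares, labelled 0..n-1.
  A surface is a pair (r,u) of permutations of {..<n}: r i is the square to the right
  of square i, u i the square above square i. Connectedness: the group generated
  by r and u acts transitively.\<close>

definition sts :: "nat \<Rightarrow> ((nat \<Rightarrow> nat) \<times> (nat \<Rightarrow> nat)) set" where
  "sts n = {(r,u). r permutes {..<n} \<and> u permutes {..<n} \<and>
     (\<forall>i<n. \<forall>j<n. (i,j) \<in> ({(k, r k) | k. k < n} \<union> {(k, u k) | k. k < n})\<^sup>*)}"

text \<open>Translation isomorphism = simultaneous relabelling of the squares.\<close>
definition sts_iso :: "nat \<Rightarrow> (((nat \<Rightarrow> nat) \<times> (nat \<Rightarrow> nat)) \<times> ((nat \<Rightarrow> nat) \<times> (nat \<Rightarrow> nat))) set" where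
  "sts_iso n = {((r,u),(r',u')). (r,u) \<in> sts n \<and> (r',u') \<in> sts n \<and>
     (\<exists>\<sigma>. \<sigma> permutes {..<n} \<and> r' = \<sigma> \<circ> r \<circ> inv \<sigma> \<and> u' = \<sigma> \<circ> u \<circ> inv \<sigma>)}"

text \<open>Commutator: the squares having the bottom-left corner of square i as their
  bottom-left corner form the cycle of i under this permutation; a vertex of cone angle
  2 pi k corresponds to a cycle of length k.\<close>
definition comm :: "(nat \<Rightarrow> nat) \<Rightarrow> (nat \<Rightarrow> nat) \<Rightarrow> nat \<Rightarrow> nat" where
  "comm r u = u \<circ> r \<circ> inv u \<circ> inv r"

text \<open>In H(2): exactly one non-regular vertex, of cone angle 6 pi, i.e. the commutator is
  a 3-cycle (exactly 3 moved points) and fixes all other squares. Then by Euler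
  characteristic the genus is 2.\<close>
definition inH2 :: "nat \<Rightarrow> (nat \<Rightarrow> nat) \<times> (nat \<Rightarrow> nat) \<Rightarrow> bool" where
  "inH2 n p = (case p of (r,u) \<Rightarrow> card {i. i < n \<and> comm r u i \<noteq> i} = 3)"

text \<open>edge_path r u i j a b: there is a path along edges of the squares from the
  bottom-left corner of square i to the bottom-left corner of square j with holonomy
  (a,b).\<close>
inductive edge_path :: "(nat \<Rightarrow> nat) \<Rightarrow> (nat \<Rightarrow> nat) \<Rightarrow> nat \<Rightarrow> nat \<Rightarrow> int \<Rightarrow> int \<Rightarrow> bool"
  for r u where
  ep_refl: "edge_path r u i i 0 0"
| ep_rot: "edge_path r u i j a b \<Longrightarrow> edge_path r u i (comm r u j) a b"
| ep_right: "edge_path r u i j a b \<Longrightarrow> edge_path r u i (r j) (a + 1) b"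
| ep_left: "edge_path r u i j a b \<Longrightarrow> edge_path r u i (inv r j) (a - 1) b"
| ep_up: "edge_path r u i j a b \<Longrightarrow> edge_path r u i (u j) a (b + 1)"
| ep_down: "edge_path r u i j a b \<Longrightarrow> edge_path r u i (inv u j) a (b - 1)"

text \<open>Lattice of periods: holonomies of paths from cone point to cone point
  (= subgroup generated by the holonomies of saddle connections).\<close>
definition periods :: "nat \<Rightarrow> (nat \<Rightarrow> nat) \<times> (nat \<Rightarrow> nat) \<Rightarrow> (int \<times> int) set" where
  "periods n p = (case p of (r,u) \<Rightarrow>
     {(a,b). \<exists>i<n. \<exists>j<n. comm r u i \<noteq> i \<and> comm r u j \<noteq> j \<and> edge_path r u i j a b})"

definition primitive :: "nat \<Rightarrow> (nat \<Rightarrow> nat) \<times> (nat \<Rightarrow> nat) \<Rightarrow> bool" where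
  "primitive n p = (periods n p = UNIV)"

definition E :: "nat \<Rightarrow> ((nat \<Rightarrow> nat) \<times> (nat \<Rightarrow> nat)) set set" where
  "E n = {p \<in> sts n. inH2 n p} // sts_iso n"

definition Ep :: "nat \<Rightarrow> ((nat \<Rightarrow> nat) \<times> (nat \<Rightarrow> nat)) set set" where
  "Ep n = {p \<in> sts n. inH2 n p \<and> primitive n p} // sts_iso n"

definition sublattice :: "(int \<times> int) set \<Rightarrow> bool" where
  "sublattice L = ((0,0) \<in> L \<and> (\<forall>x\<in>L. \<forall>y\<in>L. (fst x + fst y, snd x + snd y) \<in> L)
      \<and> (\<forall>x\<in>L. (- fst x, - snd x) \<in> L))"

definition coset :: "int \<times> int \<Rightarrow> (int \<times> int) set \<Rightarrow> (int \<times> int) set" where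
  "coset x L = {(fst x + fst y, snd x + snd y) | y. y \<in> L}"

definition Lambda :: "nat \<Rightarrow> (int \<times> int) set set" where
  "Lambda d = {L. sublattice L \<and> card (range (\<lambda>x. coset x L)) = d}"

end

theory Submission
  imports Defs "HOL-Combinatorics.Cycles"
begin

inductive wp :: "(nat \<Rightarrow> nat) \<Rightarrow> (nat \<Rightarrow> nat) \<Rightarrow> nat \<Rightarrow> nat \<Rightarrow> int \<Rightarrow> int \<Rightarrow> bool"
  for r u where
  wp_refl: "wp r u i i 0 0"
| wp_r: "wp r u i j a b \<Longrightarrow> wp r u i (r j) (a + 1) b"
| wp_l: "wp r u i j a b \<Longrightarrow> wp r u i (inv r j) (a - 1) b"
| wp_u: "wp r u i j a b \<Longrightarrow> wp r u i (u j) a (b + 1)"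
| wp_d: "wp r u i j a b \<Longrightarrow> wp r u i (inv u j) a (b - 1)"

lemma wp_cong: "wp r u i j a b \<Longrightarrow> j = j' \<Longrightarrow> a = a' \<Longrightarrow> b = b' \<Longrightarrow> wp r u i j' a' b'"
  by simp

lemma wp_trans:
  assumes "wp r u j k a' b'" "wp r u i j a b"
  shows "wp r u i k (a + a') (b + b')"
  using assms
proof (induction rule: wp.induct)
  case wp_refl then show ?case by simp
next
  case (wp_r k a' b') then show ?case using wp.wp_r[OF wp_r.IH[OF wp_r.prems]] by (simp add: algebra_simps)
next
  case (wp_l k a' b') then show ?case using wp.wp_l[OF wp_l.IH[OF wp_l.prems]] by (simp add: algebra_simps)
next
  case (wp_u k a' b') then show ?case using wp.wp_u[OF wp_u.IH[OF wp_u.prems]] by (simp add: algebra_simps)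
next
  case (wp_d k a' b') then show ?case using wp.wp_d[OF wp_d.IH[OF wp_d.prems]] by (simp add: algebra_simps)
qed

lemma wp_step_r: "wp r u j (r j) 1 0"
  using wp_r[OF wp_refl, of r u j] by simp
lemma wp_step_l: "wp r u j (inv r j) (-1) 0"
  using wp_l[OF wp_refl, of r u j] by simp
lemma wp_step_u: "wp r u j (u j) 0 1"
  using wp_u[OF wp_refl, of r u j] by simp
lemma wp_step_d: "wp r u j (inv u j) 0 (-1)"
  using wp_d[OF wp_refl, of r u j] by simp

lemma wp_rev:
  assumes "bij r" "bij u" "wp r u i j a b"
  shows "wp r u j i (-a) (-b)"
  using assms(3)
proof (induction rule: wp.induct)
  case wp_refl then show ?case by (simp add: wp.wp_refl)
next
  case (wp_r i j a b)
  have "wp r u (r j) (inv r (r j)) (-1) 0" by (rule wp_step_l)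
  then have "wp r u (r j) j (-1) 0" using assms by (simp add: bij_is_inj)
  from wp_trans[OF wp_r.IH this] show ?case by (simp add: algebra_simps)
next
  case (wp_l i j a b)
  have "wp r u (inv r j) (r (inv r j)) 1 0" by (rule wp_step_r)
  then have "wp r u (inv r j) j 1 0" using assms by (simp add: bij_is_surj surj_f_inv_f)
  from wp_trans[OF wp_l.IH this] show ?case by (simp add: algebra_simps)
next
  case (wp_u i j a b)
  have "wp r u (u j) (inv u (u j)) 0 (-1)" by (rule wp_step_d)
  then have "wp r u (u j) j 0 (-1)" using assms by (simp add: bij_is_inj)
  from wp_trans[OF wp_u.IH this] show ?case by (simp add: algebra_simps)
next
  case (wp_d i j a b)
  have "wp r u (inv u j) (u (inv u j)) 0 1" by (rule wp_step_u)
  then have "wp r u (inv u j) j 0 1" using assms by (simp add: bij_is_surj surj_f_inv_f)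
  from wp_trans[OF wp_d.IH this] show ?case by (simp add: algebra_simps)
qed

lemma comm_apply: "comm r u j = u (r (inv u (inv r j)))"
  by (simp add: comm_def)

lemma wp_comm_step: "wp r u j (comm r u j) 0 0"
proof -
  have "wp r u j (u (r (inv u (inv r j)))) (0 - 1 + 1) (0 - 1 + 1)"
    by (intro wp.intros)
  then show ?thesis by (simp add: comm_apply)
qed

lemma ep_iff:
  assumes "bij r" "bij u"
  shows "edge_path r u i j a b \<longleftrightarrow> wp r u i j a b"
proof
  assume "edge_path r u i j a b" then show "wp r u i j a b"
  proof (induction rule: edge_path.induct)
    case (ep_rot j a b)
    from wp_trans[OF wp_comm_step ep_rot.IH] show ?case by simp
  qed (auto intro: wp.intros)
next
  assume "wp r u i j a b" then show "edge_path r u i j a b"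
    by (induction rule: wp.induct) (auto intro: edge_path.intros)
qed

lemma comm_char:
  assumes "bij r" "bij u"
  shows "comm r u (r (u z)) = u (r z)"
  using assms by (simp add: comm_apply bij_is_inj)


definition reachrel :: "nat \<Rightarrow> (nat \<Rightarrow> nat) \<Rightarrow> (nat \<Rightarrow> nat) \<Rightarrow> (nat \<times> nat) set" where
  "reachrel n r u = ({(k, r k) | k. k < n} \<union> {(k, u k) | k. k < n})"

lemma sts_iff: "(r,u) \<in> sts n \<longleftrightarrow> r permutes {..<n} \<and> u permutes {..<n} \<and>
     (\<forall>i<n. \<forall>j<n. (i,j) \<in> (reachrel n r u)\<^sup>*)"
  by (simp add: sts_def reachrel_def)

lemma reach_wp:
  assumes "(i,j) \<in> (reachrel n r u)\<^sup>*"
  shows "\<exists>a b. wp r u i j a b"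
  using assms
proof (induction rule: rtrancl_induct)
  case base then show ?case by (auto intro: wp_refl)
next
  case (step y z)
  then obtain a b where "wp r u i y a b" by blast
  with step(2) show ?case unfolding reachrel_def by (auto intro: wp_r wp_u)
qed

lemma sts_wp: "(r,u) \<in> sts n \<Longrightarrow> i < n \<Longrightarrow> j < n \<Longrightarrow> \<exists>a b. wp r u i j a b"
  using reach_wp sts_iff by blast

lemma comm_permutes: "r permutes S \<Longrightarrow> u permutes S \<Longrightarrow> comm r u permutes S"
  unfolding comm_def by (intro permutes_compose permutes_inv) auto

lemma comm_bij: "r permutes S \<Longrightarrow> u permutes S \<Longrightarrow> bij (comm r u)"
  using comm_permutes permutes_bij by blast

lemma comm_outside: "r permutes {..<n} \<Longrightarrow> u permutes {..<n} \<Longrightarrow> \<not> i < n \<Longrightarrow> comm r u i = i"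
  using comm_permutes[of r "{..<n}" u] by (simp add: permutes_def)

lemma cone_cycle:
  fixes c :: "nat \<Rightarrow> nat"
  assumes "c permutes {..<n}" "card {i. i < n \<and> c i \<noteq> i} = 3"
    and "i < n" "c i \<noteq> i" "j < n" "c j \<noteq> j"
  shows "\<exists>k. j = (c ^^ k) i"
proof -
  let ?M = "{i. i < n \<and> c i \<noteq> i}"
  have inj: "inj c" using assms(1) permutes_inj by blast
  have cM: "c x \<in> ?M" if "x \<in> ?M" for x
    using that inj permutes_in_image[OF assms(1)] by (auto dest: injD)
  show ?thesis
  proof (cases "j = i \<or> j = c i")
    case True
    then show ?thesis
    proof
      assume "j = i" then have "j = (c ^^ 0) i" by simp
      then show ?thesis ..
    next
      assume "j = c i" then have "j = (c ^^ 1) i" by simp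
      then show ?thesis ..
    qed
  next
    case False
    have ciM: "c i \<in> ?M" using cM assms by auto
    have sub: "{i, c i, j} \<subseteq> ?M" using assms ciM by auto
    have "card {i, c i, j} = 3" using False assms(4) by auto
    have fin: "finite ?M" by (rule finite_subset[of _ "{..<n}"]) auto
    have "card {i, c i, j} = card ?M" using \<open>card {i, c i, j} = 3\<close> assms(2) by simp
    from card_subset_eq[OF fin sub this] have Meq: "{i, c i, j} = ?M" .
    have cciM: "c (c i) \<in> ?M" using cM ciM by blast
    have "c (c i) \<noteq> c i" using ciM by auto
    then have "c (c i) = i \<or> c (c i) = j" using cciM Meq by blast
    then show ?thesis
    proof
      assume h: "c (c i) = i"
      have "c j \<in> ?M" using cM assms by auto
      then have "c j = i \<or> c j = c i" using Meq assms(6) by blast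
      then have False
      proof
        assume "c j = i" then have "c j = c (c i)" using h by simp
        then have "j = c i" using inj by (simp add: inj_eq)
        then show False using False by simp
      next
        assume "c j = c i" then have "j = i" using inj by (simp add: inj_eq)
        then show False using False by simp
      qed
      then show ?thesis ..
    next
      assume "c (c i) = j"
      then have "j = (c ^^ 2) i" by (simp add: numeral_2_eq_2)
      then show ?thesis ..
    qed
  qed
qed

lemma wp_comm_pow: "wp r u i ((comm r u ^^ k) i) 0 0"
proof (induction k)
  case 0 then show ?case by (simp add: wp_refl)
next
  case (Suc k)
  from wp_trans[OF wp_comm_step Suc.IH] show ?case by simp
qed

lemma sts_bij: assumes "(r,u) \<in> sts n" shows "bij r" "bij u"
  using assms by (auto simp: sts_iff permutes_bij)

lemma sts_perm: assumes "(r,u) \<in> sts n" shows "r permutes {..<n}" "u permutes {..<n}"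
  using assms by (auto simp: sts_iff)

lemma inH2_iff: "inH2 n (r,u) \<longleftrightarrow> card {i. i < n \<and> comm r u i \<noteq> i} = 3"
  by (simp add: inH2_def)

lemma cone_wp:
  assumes "(r,u) \<in> sts n" "inH2 n (r,u)" "i < n" "comm r u i \<noteq> i" "j < n" "comm r u j \<noteq> j"
  shows "wp r u i j 0 0"
proof -
  obtain k where "j = (comm r u ^^ k) i"
    using cone_cycle[OF comm_permutes[OF sts_perm[OF assms(1)]]] assms inH2_iff by blast
  then show ?thesis using wp_comm_pow by simp
qed

lemma cone_exists:
  assumes "inH2 n (r,u)"
  obtains c0 where "c0 < n" "comm r u c0 \<noteq> c0"
proof -
  have "{i. i < n \<and> comm r u i \<noteq> i} \<noteq> {}" using assms inH2_iff by (metis card.empty zero_neq_numeral)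
  then show ?thesis using that by blast
qed

lemma per_loops:
  assumes "(r,u) \<in> sts n" "inH2 n (r,u)" "c0 < n" "comm r u c0 \<noteq> c0"
  shows "periods n (r,u) = {(a,b). wp r u c0 c0 a b}"
proof -
  have b: "bij r" "bij u" using sts_bij[OF assms(1)] by auto
  show ?thesis
  proof (rule set_eqI, clarify, rule iffI)
    fix a b assume "(a,b) \<in> periods n (r,u)"
    then obtain i j where ij: "i < n" "j < n" "comm r u i \<noteq> i" "comm r u j \<noteq> j" "wp r u i j a b"
      unfolding periods_def using ep_iff[OF b] by auto
    have "wp r u c0 i 0 0" using cone_wp assms ij by blast
    have "wp r u j c0 0 0" using cone_wp assms ij by blast
    from wp_trans[OF this wp_trans[OF ij(5) \<open>wp r u c0 i 0 0\<close>]]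
    show "(a,b) \<in> {(a,b). wp r u c0 c0 a b}" by simp
  next
    fix a b assume "(a,b) \<in> {(a,b). wp r u c0 c0 a b}"
    then show "(a,b) \<in> periods n (r,u)"
      unfolding periods_def using ep_iff[OF b] assms by auto
  qed
qed

definition conj_by :: "(nat \<Rightarrow> nat) \<Rightarrow> nat \<Rightarrow> (nat \<Rightarrow> nat) \<times> (nat \<Rightarrow> nat) \<Rightarrow> (nat \<Rightarrow> nat) \<times> (nat \<Rightarrow> nat) \<Rightarrow> bool" where
  "conj_by s n p q \<longleftrightarrow> s permutes {..<n} \<and> (\<forall>x. s (fst p x) = fst q (s x)) \<and> (\<forall>x. s (snd p x) = snd q (s x))"

lemma conj_eq_iff:
  assumes "s permutes S"
  shows "(r' = s \<circ> r \<circ> inv s) \<longleftrightarrow> (\<forall>x. s (r x) = r' (s x))"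
  using assms by (auto simp: fun_eq_iff permutes_inverses)

lemma sts_iso_iff:
  "(p,q) \<in> sts_iso n \<longleftrightarrow> p \<in> sts n \<and> q \<in> sts n \<and> (\<exists>s. conj_by s n p q)"
proof -
  obtain r u r' u' where pq: "p = (r,u)" "q = (r',u')" by (cases p, cases q) auto
  have "(\<exists>s. s permutes {..<n} \<and> r' = s \<circ> r \<circ> inv s \<and> u' = s \<circ> u \<circ> inv s)
     \<longleftrightarrow> (\<exists>s. conj_by s n p q)"
    unfolding conj_by_def pq fst_conv snd_conv
    by (meson conj_eq_iff)
  then show ?thesis unfolding sts_iso_def pq by auto
qed


lemma conj_inv_commute:
  assumes "bij f" "bij g" "\<And>x. s (f x) = g (s x)"
  shows "s (inv f x) = inv g (s x)"
proof -
  have "g (s (inv f x)) = s (f (inv f x))" using assms(3) by simp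
  also have "\<dots> = s x" using assms(1) by (simp add: bij_is_surj surj_f_inv_f)
  finally have "g (s (inv f x)) = s x" .
  then have "inv g (g (s (inv f x))) = inv g (s x)" by simp
  then show ?thesis using assms(2) by (simp add: bij_is_inj)
qed

lemma conj_by_inv:
  assumes "conj_by s n p q"
  shows "conj_by (inv s) n q p"
proof -
  have sp: "s permutes {..<n}" using assms conj_by_def by auto
  have "bij s" using sp permutes_bij by blast
  show ?thesis unfolding conj_by_def
  proof (intro conjI allI)
    show "inv s permutes {..<n}" using sp permutes_inv by blast
    fix x
    have "s (fst p (inv s x)) = fst q x" using assms unfolding conj_by_def by (metis permutes_inverses(1) sp)
    then show "inv s (fst q x) = fst p (inv s x)" by (metis permutes_inverses(2) sp)
    have "s (snd p (inv s x)) = snd q x" using assms unfolding conj_by_def by (metis permutes_inverses(1) sp)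
    then show "inv s (snd q x) = snd p (inv s x)" by (metis permutes_inverses(2) sp)
  qed
qed

lemma conj_by_comp:
  assumes "conj_by s n p q" "conj_by t n q w"
  shows "conj_by (t \<circ> s) n p w"
  using assms unfolding conj_by_def by (auto intro: permutes_compose)

lemma conj_by_id: "conj_by id n p p"
  unfolding conj_by_def by (auto simp: permutes_id)

lemma equiv_iso: "equiv (sts n) (sts_iso n)"
proof (rule equivI)
  show "refl_on (sts n) (sts_iso n)"
    unfolding refl_on_def using conj_by_id by (auto simp: sts_iso_iff)
  show "sym (sts_iso n)"
    unfolding sym_def sts_iso_iff using conj_by_inv by blast
  show "trans (sts_iso n)"
    unfolding trans_def sts_iso_iff using conj_by_comp by blast
  show "sts_iso n \<subseteq> sts n \<times> sts n" by (auto simp: sts_iso_def)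
qed

lemma conj_wp:
  assumes "conj_by s n (r1,u1) (r2,u2)" "bij r1" "bij u1" "bij r2" "bij u2"
    and "wp r1 u1 i j a b"
  shows "wp r2 u2 (s i) (s j) a b"
  using assms(6)
proof -
  have r: "\<And>x. s (r1 x) = r2 (s x)" and u: "\<And>x. s (u1 x) = u2 (s x)"
    using assms(1) unfolding conj_by_def by auto
  have ri: "\<And>x. s (inv r1 x) = inv r2 (s x)" by (rule conj_inv_commute[OF assms(2,4)]) (rule r)
  have ui: "\<And>x. s (inv u1 x) = inv u2 (s x)" by (rule conj_inv_commute[OF assms(3,5)]) (rule u)
  show ?thesis using assms(6)
    by (induction rule: wp.induct) (auto simp: r u ri ui intro: wp.intros)
qed

lemma conj_comm:
  assumes "conj_by s n (r1,u1) (r2,u2)" "bij r1" "bij u1" "bij r2" "bij u2"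
  shows "s (comm r1 u1 x) = comm r2 u2 (s x)"
proof -
  have r: "\<And>x. s (r1 x) = r2 (s x)" and u: "\<And>x. s (u1 x) = u2 (s x)"
    using assms(1) unfolding conj_by_def by auto
  have ri: "\<And>x. s (inv r1 x) = inv r2 (s x)" by (rule conj_inv_commute[OF assms(2,4)]) (rule r)
  have ui: "\<And>x. s (inv u1 x) = inv u2 (s x)" by (rule conj_inv_commute[OF assms(3,5)]) (rule u)
  show ?thesis by (simp add: comm_apply r u ri ui)
qed

lemma conj_periods_sub:
  assumes "conj_by s n p q" "p \<in> sts n" "q \<in> sts n"
  shows "periods n p \<subseteq> periods n q"
proof -
  obtain r1 u1 r2 u2 where pq: "p = (r1,u1)" "q = (r2,u2)" by (cases p, cases q) auto
  have b: "bij r1" "bij u1" "bij r2" "bij u2" using assms sts_bij pq by auto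
  have sp: "s permutes {..<n}" using assms conj_by_def by auto
  have inj: "inj s" using sp permutes_inj by blast
  show ?thesis
  proof
    fix x assume "x \<in> periods n p"
    then obtain a b i j where x: "x = (a,b)" "i < n" "j < n" "comm r1 u1 i \<noteq> i" "comm r1 u1 j \<noteq> j"
      "wp r1 u1 i j a b"
      unfolding periods_def pq using ep_iff[OF b(1,2)] by auto
    have "wp r2 u2 (s i) (s j) a b" using conj_wp[OF assms(1)[unfolded pq] b x(6)] .
    moreover have "s i < n" "s j < n" using x sp permutes_in_image by (metis lessThan_iff)+
    moreover have "comm r2 u2 (s i) \<noteq> s i" "comm r2 u2 (s j) \<noteq> s j"
      using conj_comm[OF assms(1)[unfolded pq] b] x inj by (metis injD)+
    ultimately show "x \<in> periods n q"
      unfolding periods_def pq x using ep_iff[OF b(3,4)] by auto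
  qed
qed

lemma iso_periods:
  assumes "(p,q) \<in> sts_iso n"
  shows "periods n p = periods n q"
proof -
  obtain s where "conj_by s n p q" "p \<in> sts n" "q \<in> sts n" using assms sts_iso_iff by blast
  then show ?thesis using conj_periods_sub conj_by_inv by (metis subset_antisym)
qed

lemma conj_inH2_sub:
  assumes "conj_by s n p q" "p \<in> sts n" "q \<in> sts n"
  shows "card {i. i < n \<and> comm (fst q) (snd q) i \<noteq> i} = card {i. i < n \<and> comm (fst p) (snd p) i \<noteq> i}"
proof -
  obtain r1 u1 r2 u2 where pq: "p = (r1,u1)" "q = (r2,u2)" by (cases p, cases q) auto
  have b: "bij r1" "bij u1" "bij r2" "bij u2" using assms sts_bij pq by auto
  have sp: "s permutes {..<n}" using assms conj_by_def by auto
  have inj: "inj s" using sp permutes_inj by blast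
  have c: "\<And>x. s (comm r1 u1 x) = comm r2 u2 (s x)" using conj_comm[OF assms(1)[unfolded pq] b] .
  have "{i. i < n \<and> comm r2 u2 i \<noteq> i} = s ` {i. i < n \<and> comm r1 u1 i \<noteq> i}"
  proof (rule set_eqI, rule iffI)
    fix x assume x: "x \<in> {i. i < n \<and> comm r2 u2 i \<noteq> i}"
    let ?y = "inv s x"
    have "s ?y = x" using sp permutes_inverses by metis
    moreover have "?y < n" using x sp by (metis lessThan_iff mem_Collect_eq permutes_inv permutes_in_image)
    moreover have "comm r1 u1 ?y \<noteq> ?y" using c[of ?y] x \<open>s ?y = x\<close> by auto
    ultimately show "x \<in> s ` {i. i < n \<and> comm r1 u1 i \<noteq> i}" by (metis (mono_tags, lifting) image_eqI mem_Collect_eq)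
  next
    fix x assume "x \<in> s ` {i. i < n \<and> comm r1 u1 i \<noteq> i}"
    then obtain y where y: "x = s y" "y < n" "comm r1 u1 y \<noteq> y" by auto
    then show "x \<in> {i. i < n \<and> comm r2 u2 i \<noteq> i}" using c[of y] inj sp
      by (metis (mono_tags, lifting) injD lessThan_iff mem_Collect_eq permutes_in_image)
  qed
  then show ?thesis using pq inj by (simp add: card_image inj_on_subset)
qed

lemma iso_inH2:
  assumes "(p,q) \<in> sts_iso n"
  shows "inH2 n p \<longleftrightarrow> inH2 n q"
proof -
  obtain s where "conj_by s n p q" "p \<in> sts n" "q \<in> sts n" using assms sts_iso_iff by blast
  from conj_inH2_sub[OF this] show ?thesis unfolding inH2_def by (cases p, cases q) auto
qed


lemma quot_bij:
  assumes eX: "equiv X R" and eY: "equiv Y R'"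
    and AX: "A \<subseteq> X" and BY: "B \<subseteq> Y"
    and Acl: "\<And>p p'. p \<in> A \<Longrightarrow> (p,p') \<in> R \<Longrightarrow> p' \<in> A"
    and FAB: "\<And>p. p \<in> A \<Longrightarrow> F p \<in> B"
    and resp: "\<And>p1 p2. p1 \<in> A \<Longrightarrow> p2 \<in> A \<Longrightarrow> (p1,p2) \<in> R \<Longrightarrow> (F p1, F p2) \<in> R'"
    and refl: "\<And>p1 p2. p1 \<in> A \<Longrightarrow> p2 \<in> A \<Longrightarrow> (F p1, F p2) \<in> R' \<Longrightarrow> (p1,p2) \<in> R"
    and surj: "\<And>q. q \<in> B \<Longrightarrow> \<exists>p\<in>A. (F p, q) \<in> R'"
  shows "bij_betw (\<lambda>C. R' `` (F ` C)) (A // R) (B // R')"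
proof -
  have cls: "R' `` (F ` (R `` {p})) = R' `` {F p}" if p: "p \<in> A" for p
  proof
    show "R' `` {F p} \<subseteq> R' `` (F ` (R `` {p}))"
    proof -
      have "p \<in> R `` {p}" using eX AX p by (meson equiv_class_self subsetD)
      then show ?thesis by auto
    qed
    show "R' `` (F ` (R `` {p})) \<subseteq> R' `` {F p}"
    proof
      fix y assume "y \<in> R' `` (F ` (R `` {p}))"
      then obtain p' where p': "(p,p') \<in> R" "(F p', y) \<in> R'" by auto
      have "p' \<in> A" using Acl p p'(1) by blast
      have "(F p, F p') \<in> R'" using resp p \<open>p' \<in> A\<close> p'(1) by blast
      then have "(F p, y) \<in> R'" using p'(2) eY by (meson equivE transD)
      then show "y \<in> R' `` {F p}" by simp
    qed
  qed
  show ?thesis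
  proof (rule bij_betw_imageI)
    show "inj_on (\<lambda>C. R' `` (F ` C)) (A // R)"
    proof (rule inj_onI)
      fix C D assume C: "C \<in> A // R" and D: "D \<in> A // R" and eq: "R' `` (F ` C) = R' `` (F ` D)"
      obtain p where p: "p \<in> A" "C = R `` {p}" using C by (auto elim: quotientE)
      obtain q where q: "q \<in> A" "D = R `` {q}" using D by (auto elim: quotientE)
      have "R' `` {F p} = R' `` {F q}" using eq cls p q by simp
      then have "(F p, F q) \<in> R'" using eY FAB p q BY by (meson equiv_class_eq_iff subsetD)
      then have "(p,q) \<in> R" using refl p q by blast
      then show "C = D" using p q eX by (simp add: equiv_class_eq)
    qed
    show "(\<lambda>C. R' `` (F ` C)) ` (A // R) = B // R'"
    proof (rule set_eqI, rule iffI)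
      fix E assume "E \<in> (\<lambda>C. R' `` (F ` C)) ` (A // R)"
      then obtain p where p: "p \<in> A" "E = R' `` (F ` (R `` {p}))" by (auto elim: quotientE)
      then have "E = R' `` {F p}" using cls by simp
      then show "E \<in> B // R'" using FAB p by (auto intro: quotientI)
    next
      fix E assume "E \<in> B // R'"
      then obtain q where q: "q \<in> B" "E = R' `` {q}" by (auto elim: quotientE)
      obtain p where p: "p \<in> A" "(F p, q) \<in> R'" using surj q by blast
      have "R' `` {F p} = E" using q p eY by (simp add: equiv_class_eq)
      then have "E = R' `` (F ` (R `` {p}))" using cls p by simp
      moreover have "R `` {p} \<in> A // R" using p by (auto intro: quotientI)
      ultimately show "E \<in> (\<lambda>C. R' `` (F ` C)) ` (A // R)" by blast
    qed
  qed
qed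

definition QA :: "nat \<Rightarrow> (int \<times> int) set \<Rightarrow> ((nat \<Rightarrow> nat) \<times> (nat \<Rightarrow> nat)) set" where
  "QA n L = {p \<in> sts n. inH2 n p \<and> periods n p = L}"

definition Q :: "nat \<Rightarrow> (int \<times> int) set \<Rightarrow> ((nat \<Rightarrow> nat) \<times> (nat \<Rightarrow> nat)) set set" where
  "Q n L = QA n L // sts_iso n"

lemma QA_closed: "p \<in> QA n L \<Longrightarrow> (p,p') \<in> sts_iso n \<Longrightarrow> p' \<in> QA n L"
proof -
  assume a: "p \<in> QA n L" "(p,p') \<in> sts_iso n"
  have "p' \<in> sts n" using a(2) sts_iso_iff by blast
  moreover have "inH2 n p'" using a iso_inH2 unfolding QA_def by blast
  moreover have "periods n p' = L" using a iso_periods unfolding QA_def by blast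
  ultimately show ?thesis unfolding QA_def by blast
qed

lemma Q_card_eq:
  assumes FAB: "\<And>p. p \<in> QA n L \<Longrightarrow> F p \<in> QA m L'"
    and resp: "\<And>p1 p2. p1 \<in> QA n L \<Longrightarrow> p2 \<in> QA n L \<Longrightarrow> (p1,p2) \<in> sts_iso n \<Longrightarrow> (F p1, F p2) \<in> sts_iso m"
    and refl: "\<And>p1 p2. p1 \<in> QA n L \<Longrightarrow> p2 \<in> QA n L \<Longrightarrow> (F p1, F p2) \<in> sts_iso m \<Longrightarrow> (p1,p2) \<in> sts_iso n"
    and surj: "\<And>q. q \<in> QA m L' \<Longrightarrow> \<exists>p\<in>QA n L. (F p, q) \<in> sts_iso m"
  shows "card (Q n L) = card (Q m L')"
proof -
  have "bij_betw (\<lambda>C. sts_iso m `` (F ` C)) (QA n L // sts_iso n) (QA m L' // sts_iso m)"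
    by (rule quot_bij[OF equiv_iso equiv_iso _ _ QA_closed FAB resp refl surj])
       (auto simp: QA_def)
  then show ?thesis unfolding Q_def by (rule bij_betw_same_card)
qed


lemma reach_transfer:
  assumes "\<And>k. k < n \<Longrightarrow> (k, r k) \<in> R\<^sup>*" "\<And>k. k < n \<Longrightarrow> (k, u k) \<in> R\<^sup>*"
    and "(i,j) \<in> (reachrel n r u)\<^sup>*"
  shows "(i,j) \<in> R\<^sup>*"
  using assms(3)
proof (induction rule: rtrancl_induct)
  case base then show ?case by simp
next
  case (step y z)
  then have "y < n" "z = r y \<or> z = u y" unfolding reachrel_def by auto
  then have "(y,z) \<in> R\<^sup>*" using assms(1,2) by blast
  with step.IH show ?case by simp
qed

lemma reach_step_r: "k < n \<Longrightarrow> (k, r k) \<in> (reachrel n r u)\<^sup>*"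
  unfolding reachrel_def by blast
lemma reach_step_u: "k < n \<Longrightarrow> (k, u k) \<in> (reachrel n r u)\<^sup>*"
  unfolding reachrel_def by blast

lemma reach_rpow:
  assumes "r permutes {..<n}" "k < n"
  shows "(k, (r ^^ j) k) \<in> (reachrel n r u)\<^sup>*"
proof (induction j)
  case 0 then show ?case by simp
next
  case (Suc j)
  have "(r ^^ j) k \<in> {..<n}" using assms(2) permutes_in_image[OF permutes_funpow[OF assms(1)]] by simp
  then have "(r ^^ j) k < n" by simp
  then have "((r ^^ j) k, r ((r ^^ j) k)) \<in> (reachrel n r u)\<^sup>*" by (rule reach_step_r)
  from rtrancl_trans[OF Suc this] show ?case by simp
qed

lemma inv_as_pow:
  fixes r :: "nat \<Rightarrow> nat"
  assumes "r permutes {..<n}"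
  obtains N where "\<And>x. inv r x = (r ^^ N) x"
proof -
  have "permutation r" by (rule permutes_imp_permutation[OF _ assms]) simp
  then obtain M where M: "r ^^ M = id" "M > 0" by (rule permutation_is_nilpotent)
  have "r ((r ^^ (M - 1)) x) = x" for x
  proof -
    have "r ((r ^^ (M - 1)) x) = (r ^^ Suc (M - 1)) x" by simp
    also have "Suc (M - 1) = M" using M(2) by simp
    finally show ?thesis using M(1) by simp
  qed
  then have "inv r x = (r ^^ (M - 1)) x" for x
    using permutes_inv_eq[OF assms] by blast
  then show ?thesis using that by blast
qed

lemma reach_rinv:
  assumes "r permutes {..<n}" "k < n"
  shows "(k, inv r k) \<in> (reachrel n r u)\<^sup>*"
proof -
  obtain N where "\<And>x. inv r x = (r ^^ N) x" using inv_as_pow[OF assms(1)] by blast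
  then show ?thesis using reach_rpow[OF assms] by simp
qed

lemma funpow_inv_cancel:
  assumes "bij r"
  shows "(inv r ^^ k) ((r ^^ k) x) = x" "(r ^^ k) ((inv r ^^ k) x) = x"
proof -
  show "(inv r ^^ k) ((r ^^ k) x) = x"
  proof (induction k arbitrary: x)
    case 0 then show ?case by simp
  next
    case (Suc k)
    have e1: "(inv r ^^ Suc k) y = (inv r ^^ k) (inv r y)" for y
      by (simp only: funpow_Suc_right o_apply)
    have "(inv r ^^ Suc k) ((r ^^ Suc k) x) = (inv r ^^ k) (inv r ((r ^^ Suc k) x))"
      by (rule e1)
    also have "\<dots> = (inv r ^^ k) (inv r (r ((r ^^ k) x)))" by simp
    also have "\<dots> = x" using assms Suc by (simp add: bij_is_inj)
    finally show ?case .
  qed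
  show "(r ^^ k) ((inv r ^^ k) x) = x"
  proof (induction k arbitrary: x)
    case 0 then show ?case by simp
  next
    case (Suc k)
    have e1: "(r ^^ Suc k) y = (r ^^ k) (r y)" for y
      by (simp only: funpow_Suc_right o_apply)
    have "(r ^^ Suc k) ((inv r ^^ Suc k) x) = (r ^^ k) (r ((inv r ^^ Suc k) x))"
      by (rule e1)
    also have "\<dots> = (r ^^ k) (r (inv r ((inv r ^^ k) x)))" by simp
    also have "\<dots> = x" using assms Suc by (simp add: bij_is_surj surj_f_inv_f)
    finally show ?case .
  qed
qed

lemma wp_rpow: "wp r u j ((r ^^ k) j) (int k) 0"
proof (induction k)
  case 0 then show ?case by (simp add: wp_refl)
next
  case (Suc k) from wp_r[OF this] show ?case by (simp add: algebra_simps)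
qed

lemma wp_rinvpow: "wp r u j ((inv r ^^ k) j) (- int k) 0"
proof (induction k)
  case 0 then show ?case by (simp add: wp_refl)
next
  case (Suc k) from wp_l[OF this] show ?case by (rule wp_cong) simp_all
qed

lemma wp_upow: "wp r u j ((u ^^ k) j) 0 (int k)"
proof (induction k)
  case 0 then show ?case by (simp add: wp_refl)
next
  case (Suc k) from wp_u[OF this] show ?case by (simp add: algebra_simps)
qed

lemma conj_pow:
  assumes "\<And>x. s (f x) = g (s x)"
  shows "s ((f ^^ k) x) = (g ^^ k) (s x)"
  by (induction k) (auto simp: assms)

lemma bif1: "bij f \<Longrightarrow> inv f (f x) = x" by (simp add: bij_is_inj)
lemma bif2: "bij f \<Longrightarrow> f (inv f x) = x" by (simp add: bij_is_surj surj_f_inv_f)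

section \<open>Swap\<close>

lemma reachrel_swap: "reachrel n u r = reachrel n r u"
  unfolding reachrel_def by auto

lemma sts_swap: assumes "(r,u) \<in> sts n" shows "(u,r) \<in> sts n"
proof -
  have eq: "reachrel n u r = reachrel n r u" by (rule reachrel_swap)
  show ?thesis using assms unfolding sts_iff eq by blast
qed

lemma comm_swap_cancel:
  assumes "bij r" "bij u"
  shows "comm u r (comm r u x) = x"
  using assms by (simp add: comm_apply bif1 bif2)

lemma comm_swap_fix:
  assumes "bij r" "bij u"
  shows "comm u r x = x \<longleftrightarrow> comm r u x = x"
  using comm_swap_cancel[OF assms] comm_swap_cancel[OF assms(2,1)] by metis

lemma wp_swap: "wp r u i j a b \<Longrightarrow> wp u r i j b a"
  by (induction rule: wp.induct) (auto intro: wp.intros)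

lemma wp_swap_iff: "wp u r i j b a \<longleftrightarrow> wp r u i j a b"
  using wp_swap[of r u] wp_swap[of u r] by blast

definition swapL :: "(int \<times> int) set \<Rightarrow> (int \<times> int) set" where
  "swapL L = {(x,y). (y,x) \<in> L}"

lemma periods_swap:
  assumes "(r,u) \<in> sts n"
  shows "periods n (u,r) = swapL (periods n (r,u))"
proof -
  have b: "bij r" "bij u" using sts_bij assms by auto
  show ?thesis
    unfolding periods_def swapL_def by (simp add: ep_iff[OF b] ep_iff[OF b(2,1)] comm_swap_fix[OF b] wp_swap_iff)
qed

lemma inH2_swap:
  assumes "(r,u) \<in> sts n"
  shows "inH2 n (u,r) \<longleftrightarrow> inH2 n (r,u)"
proof -
  have b: "bij r" "bij u" using sts_bij assms by auto
  show ?thesis unfolding inH2_iff using comm_swap_fix[OF b] by simp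
qed

lemma swapL_swapL[simp]: "swapL (swapL L) = L"
  unfolding swapL_def by auto

lemma conj_swap: "conj_by s n (r1,u1) (r2,u2) \<Longrightarrow> conj_by s n (u1,r1) (u2,r2)"
  unfolding conj_by_def by auto

lemma iso_swap: "((r1,u1),(r2,u2)) \<in> sts_iso n \<Longrightarrow> ((u1,r1),(u2,r2)) \<in> sts_iso n"
  unfolding sts_iso_iff using conj_swap sts_swap by blast

definition sw :: "(nat \<Rightarrow> nat) \<times> (nat \<Rightarrow> nat) \<Rightarrow> (nat \<Rightarrow> nat) \<times> (nat \<Rightarrow> nat)" where
  "sw p = (snd p, fst p)"

lemma sw_QA: "p \<in> QA n L \<Longrightarrow> sw p \<in> QA n (swapL L)"
  unfolding QA_def sw_def using sts_swap inH2_swap periods_swap by (cases p) auto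

lemma sw_sw[simp]: "sw (sw p) = p" unfolding sw_def by simp

lemma iso_sw: "(p1,p2) \<in> sts_iso n \<Longrightarrow> (sw p1, sw p2) \<in> sts_iso n"
  unfolding sw_def using iso_swap by (cases p1, cases p2) auto

lemma Q_swap: "card (Q n L) = card (Q n (swapL L))"
proof (rule Q_card_eq[where F = sw])
  show "\<And>p. p \<in> QA n L \<Longrightarrow> sw p \<in> QA n (swapL L)" by (rule sw_QA)
  show "\<And>p1 p2. (p1,p2) \<in> sts_iso n \<Longrightarrow> (sw p1, sw p2) \<in> sts_iso n" by (rule iso_sw)
  show "\<And>p1 p2. (sw p1, sw p2) \<in> sts_iso n \<Longrightarrow> (p1, p2) \<in> sts_iso n" using iso_sw sw_sw by metis
  fix q assume "q \<in> QA n (swapL L)"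
  then have "sw q \<in> QA n L" using sw_QA by fastforce
  moreover have "(sw (sw q), q) \<in> sts_iso n" using \<open>q \<in> QA n (swapL L)\<close> equiv_iso
    unfolding QA_def by (simp add: equiv_def refl_on_def)
  ultimately show "\<exists>p\<in>QA n L. (sw p, q) \<in> sts_iso n" by blast
qed


section \<open>Shear\<close>

definition sh :: "nat \<Rightarrow> (nat \<Rightarrow> nat) \<times> (nat \<Rightarrow> nat) \<Rightarrow> (nat \<Rightarrow> nat) \<times> (nat \<Rightarrow> nat)" where
  "sh k p = (fst p, snd p \<circ> (fst p ^^ k))"

definition ush :: "nat \<Rightarrow> (nat \<Rightarrow> nat) \<times> (nat \<Rightarrow> nat) \<Rightarrow> (nat \<Rightarrow> nat) \<times> (nat \<Rightarrow> nat)" where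
  "ush k p = (fst p, snd p \<circ> (inv (fst p) ^^ k))"

definition shL :: "nat \<Rightarrow> (int \<times> int) set \<Rightarrow> (int \<times> int) set" where
  "shL k L = {(x,y). (x + int k * y, y) \<in> L}"

lemma sh_ush: "bij r \<Longrightarrow> sh k (ush k (r,u)) = (r,u)"
  unfolding sh_def ush_def by (simp add: fun_eq_iff funpow_inv_cancel)

lemma ush_sh: "bij r \<Longrightarrow> ush k (sh k (r,u)) = (r,u)"
  unfolding sh_def ush_def by (simp add: fun_eq_iff funpow_inv_cancel)

lemma bij_funpow: fixes f :: "'a \<Rightarrow> 'a" shows "bij f \<Longrightarrow> bij (f ^^ k)"
proof (induction k)
  case 0
  have "f ^^ 0 = id" by (simp add: fun_eq_iff)
  then show ?case by (simp only: bij_id)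
next
  case (Suc k)
  have "f ^^ Suc k = f \<circ> (f ^^ k)" by simp
  then show ?case using Suc bij_comp by metis
qed

lemma reach_rinvpow:
  assumes "r permutes {..<n}" "k < n"
  shows "(k, (inv r ^^ j) k) \<in> (reachrel n r u)\<^sup>*"
proof (induction j)
  case 0 then show ?case by simp
next
  case (Suc j)
  have "(inv r ^^ j) k \<in> {..<n}" using assms(2) permutes_in_image[OF permutes_funpow[OF permutes_inv[OF assms(1)]]] by simp
  then have "(inv r ^^ j) k < n" by simp
  then have "((inv r ^^ j) k, inv r ((inv r ^^ j) k)) \<in> (reachrel n r u)\<^sup>*" by (rule reach_rinv[OF assms(1)])
  from rtrancl_trans[OF Suc this] show ?case by simp
qed

lemma sts_sh:
  assumes "(r,u) \<in> sts n"
  shows "sh k (r,u) \<in> sts n"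
proof -
  have rp: "r permutes {..<n}" and up: "u permutes {..<n}" using sts_perm[OF assms] by auto
  have b: "bij r" "bij u" using sts_bij[OF assms] by auto
  let ?u = "u \<circ> (r ^^ k)"
  have up': "?u permutes {..<n}" by (rule permutes_compose[OF permutes_funpow[OF rp] up])
  have "(i,j) \<in> (reachrel n r ?u)\<^sup>*" if "i < n" "j < n" for i j
  proof (rule reach_transfer[of n r _ u])
    show "(i, j) \<in> (reachrel n r u)\<^sup>*" using assms that sts_iff by blast
    fix z assume z: "z < n"
    show "(z, r z) \<in> (reachrel n r ?u)\<^sup>*" using z by (rule reach_step_r)
    have "(inv r ^^ k) z \<in> {..<n}" using z permutes_in_image[OF permutes_funpow[OF permutes_inv[OF rp]]] by simp
    then have "((inv r ^^ k) z, ?u ((inv r ^^ k) z)) \<in> (reachrel n r ?u)\<^sup>*" by (intro reach_step_u) simp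
    moreover have "?u ((inv r ^^ k) z) = u z" using b by (simp add: funpow_inv_cancel)
    ultimately show "(z, u z) \<in> (reachrel n r ?u)\<^sup>*"
      using reach_rinvpow[OF rp z] by (metis rtrancl_trans)
  qed
  then show ?thesis unfolding sh_def using rp up' by (simp add: sts_iff)
qed

lemma sts_ush:
  assumes "(r,u) \<in> sts n"
  shows "ush k (r,u) \<in> sts n"
proof -
  have rp: "r permutes {..<n}" and up: "u permutes {..<n}" using sts_perm[OF assms] by auto
  have b: "bij r" "bij u" using sts_bij[OF assms] by auto
  let ?u = "u \<circ> (inv r ^^ k)"
  have up': "?u permutes {..<n}" by (rule permutes_compose[OF permutes_funpow[OF permutes_inv[OF rp]] up])
  have "(i,j) \<in> (reachrel n r ?u)\<^sup>*" if "i < n" "j < n" for i j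
  proof (rule reach_transfer[of n r _ u])
    show "(i, j) \<in> (reachrel n r u)\<^sup>*" using assms that sts_iff by blast
    fix z assume z: "z < n"
    show "(z, r z) \<in> (reachrel n r ?u)\<^sup>*" using z by (rule reach_step_r)
    have "(r ^^ k) z \<in> {..<n}" using z permutes_in_image[OF permutes_funpow[OF rp]] by simp
    then have "((r ^^ k) z, ?u ((r ^^ k) z)) \<in> (reachrel n r ?u)\<^sup>*" by (intro reach_step_u) simp
    moreover have "?u ((r ^^ k) z) = u z" using b by (simp add: funpow_inv_cancel)
    ultimately show "(z, u z) \<in> (reachrel n r ?u)\<^sup>*"
      using reach_rpow[OF rp z] by (metis rtrancl_trans)
  qed
  then show ?thesis unfolding ush_def using rp up' by (simp add: sts_iff)
qed

lemma comm_sh: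
  fixes r u :: "nat \<Rightarrow> nat"
  assumes "bij r" "bij u"
  shows "comm r (u \<circ> (r ^^ k)) = comm r u"
proof
  fix w
  let ?u = "u \<circ> (r ^^ k)"
  have bu: "bij ?u" using assms bij_funpow bij_comp by blast
  define z where "z = inv ?u (inv r w)"
  have w: "w = r (?u z)" unfolding z_def by (simp only: bif2[OF bu] bif2[OF assms(1)])
  have "comm r ?u w = ?u (r z)" unfolding w by (rule comm_char[OF assms(1) bu])
  also have "\<dots> = u (r ((r ^^ k) z))" by (simp add: funpow_swap1)
  also have "\<dots> = comm r u (r (u ((r ^^ k) z)))" by (rule comm_char[OF assms, symmetric])
  also have "r (u ((r ^^ k) z)) = w" using w by simp
  finally show "comm r ?u w = comm r u w" .
qed

lemma comm_ush:
  fixes r u :: "nat \<Rightarrow> nat"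
  assumes "bij r" "bij u"
  shows "comm r (u \<circ> (inv r ^^ k)) = comm r u"
proof -
  let ?u = "u \<circ> (inv r ^^ k)"
  have bu: "bij ?u" using assms bij_funpow bij_comp bij_imp_bij_inv by blast
  have "?u \<circ> (r ^^ k) = u" using assms by (simp add: fun_eq_iff funpow_inv_cancel)
  then show ?thesis using comm_sh[OF assms(1) bu, of k] by simp
qed

lemma wp_sh:
  fixes r u :: "nat \<Rightarrow> nat"
  assumes "bij r" "bij u"
  shows "wp r (u \<circ> (r ^^ k)) i j x y \<Longrightarrow> wp r u i j (x + int k * y) y"
proof (induction rule: wp.induct)
  case wp_refl then show ?case by (simp add: wp.wp_refl)
next
  case (wp_r i j a b) from wp.wp_r[OF wp_r.IH] show ?case by (rule wp_cong) simp_all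
next
  case (wp_l i j a b) from wp.wp_l[OF wp_l.IH] show ?case by (rule wp_cong) simp_all
next
  case (wp_u i j a b)
  from wp.wp_u[OF wp_trans[OF wp_rpow[of r u j k] wp_u.IH]]
  show ?case by (rule wp_cong) (simp_all add: algebra_simps)
next
  case (wp_d i j a b)
  let ?u = "u \<circ> (r ^^ k)"
  have bu: "bij ?u" using assms bij_funpow bij_comp by blast
  have h: "?u ((inv r ^^ k) (inv u j)) = j"
    by (simp add: funpow_inv_cancel(2)[OF assms(1)] bif2[OF assms(2)])
  have e: "inv ?u j = (inv r ^^ k) (inv u j)"
    using bif1[OF bu, of "(inv r ^^ k) (inv u j)"] unfolding h .
  from wp_trans[OF wp_rinvpow[of r u "inv u j" k] wp.wp_d[OF wp_d.IH]]
  show ?case by (rule wp_cong[OF _ e[symmetric]]) (simp_all add: algebra_simps)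
qed

lemma wp_sh_rev:
  fixes r u :: "nat \<Rightarrow> nat"
  assumes "bij r" "bij u"
  shows "wp r u i j x y \<Longrightarrow> wp r (u \<circ> (r ^^ k)) i j (x - int k * y) y"
proof (induction rule: wp.induct)
  case wp_refl then show ?case by (simp add: wp.wp_refl)
next
  case (wp_r i j a b) from wp.wp_r[OF wp_r.IH] show ?case by (rule wp_cong) simp_all
next
  case (wp_l i j a b) from wp.wp_l[OF wp_l.IH] show ?case by (rule wp_cong) simp_all
next
  case (wp_u i j a b)
  let ?u = "u \<circ> (r ^^ k)"
  have e: "?u ((inv r ^^ k) j) = u j" using funpow_inv_cancel(2)[OF assms(1), of k j] by simp
  from wp.wp_u[OF wp_trans[OF wp_rinvpow[of r ?u j k] wp_u.IH]]
  show ?case by (rule wp_cong[OF _ e]) (simp_all add: algebra_simps)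
next
  case (wp_d i j a b)
  let ?u = "u \<circ> (r ^^ k)"
  have bu: "bij ?u" using assms bij_funpow bij_comp by blast
  have h: "u ((r ^^ k) (inv ?u j)) = j" using bif2[OF bu, of j] by simp
  have e: "inv u j = (r ^^ k) (inv ?u j)"
    using bif1[OF assms(2), of "(r ^^ k) (inv ?u j)"] unfolding h .
  from wp_trans[OF wp_rpow[of r ?u "inv ?u j" k] wp.wp_d[OF wp_d.IH]]
  show ?case by (rule wp_cong[OF _ e[symmetric]]) (simp_all add: algebra_simps)
qed

lemma periods_sh:
  assumes "(r,u) \<in> sts n"
  shows "periods n (sh k (r,u)) = shL k (periods n (r,u))"
proof -
  have b: "bij r" "bij u" using sts_bij[OF assms] by auto
  let ?u = "u \<circ> (r ^^ k)"
  have bu: "bij ?u" using b bij_funpow bij_comp by blast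
  have c: "comm r ?u = comm r u" by (rule comm_sh[OF b])
  show ?thesis
  proof (rule set_eqI, clarify)
    fix x y
    show "(x,y) \<in> periods n (sh k (r,u)) \<longleftrightarrow> (x,y) \<in> shL k (periods n (r,u))"
    proof
      assume "(x,y) \<in> periods n (sh k (r,u))"
      then obtain i j where ij: "i < n" "j < n" "comm r u i \<noteq> i" "comm r u j \<noteq> j" "wp r ?u i j x y"
        unfolding periods_def sh_def using ep_iff[OF b(1) bu] c by auto
      have "wp r u i j (x + int k * y) y" using wp_sh[OF b ij(5)] .
      then show "(x,y) \<in> shL k (periods n (r,u))"
        unfolding shL_def periods_def using ij ep_iff[OF b] by auto
    next
      assume "(x,y) \<in> shL k (periods n (r,u))"
      then obtain i j where ij: "i < n" "j < n" "comm r u i \<noteq> i" "comm r u j \<noteq> j" "wp r u i j (x + int k * y) y"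
        unfolding periods_def shL_def using ep_iff[OF b] by auto
      have "wp r ?u i j x y" using wp_sh_rev[OF b ij(5), of k] by simp
      then show "(x,y) \<in> periods n (sh k (r,u))"
        unfolding periods_def sh_def using ij ep_iff[OF b(1) bu] c by auto
    qed
  qed
qed

lemma shL_inj: "shL k A = shL k B \<Longrightarrow> A = B"
proof -
  assume e: "shL k A = shL k B"
  have "(x,y) \<in> A \<longleftrightarrow> (x,y) \<in> B" for x y
  proof -
    have "(x - int k * y, y) \<in> shL k A \<longleftrightarrow> (x - int k * y, y) \<in> shL k B" using e by simp
    then show ?thesis unfolding shL_def by simp
  qed
  then show "A = B" by auto
qed

lemma conj_sh:
  assumes "conj_by s n (r1,u1) (r2,u2)"
  shows "conj_by s n (sh k (r1,u1)) (sh k (r2,u2))"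
proof -
  have r: "\<And>x. s (r1 x) = r2 (s x)" and u: "\<And>x. s (u1 x) = u2 (s x)"
    using assms unfolding conj_by_def by auto
  have "s ((r1 ^^ k) x) = (r2 ^^ k) (s x)" for x using conj_pow[of s r1 r2, OF r] .
  then show ?thesis using assms unfolding conj_by_def sh_def by (simp add: u)
qed

lemma conj_ush:
  assumes "conj_by s n (r1,u1) (r2,u2)" "bij r1" "bij r2"
  shows "conj_by s n (ush k (r1,u1)) (ush k (r2,u2))"
proof -
  have r: "\<And>x. s (r1 x) = r2 (s x)" and u: "\<And>x. s (u1 x) = u2 (s x)"
    using assms unfolding conj_by_def by auto
  have ri: "\<And>x. s (inv r1 x) = inv r2 (s x)" by (rule conj_inv_commute[OF assms(2,3)]) (rule r)
  have "s ((inv r1 ^^ k) x) = (inv r2 ^^ k) (s x)" for x using conj_pow[of s "inv r1" "inv r2", OF ri] .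
  then show ?thesis using assms unfolding conj_by_def ush_def by (simp add: u)
qed

lemma sh_QA:
  assumes "p \<in> QA n L"
  shows "sh k p \<in> QA n (shL k L)"
proof -
  obtain r u where p: "p = (r,u)" by (cases p)
  have s: "(r,u) \<in> sts n" using assms p QA_def by auto
  have b: "bij r" "bij u" using sts_bij[OF s] by auto
  have "inH2 n (sh k (r,u))" using assms p comm_sh[OF b] unfolding QA_def inH2_def sh_def by auto
  then show ?thesis using sts_sh[OF s] periods_sh[OF s] assms p unfolding QA_def by auto
qed

lemma ush_QA:
  assumes "q \<in> QA n (shL k L)"
  shows "ush k q \<in> QA n L"
proof -
  obtain r u where q: "q = (r,u)" by (cases q)
  have s: "(r,u) \<in> sts n" using assms q QA_def by auto
  have b: "bij r" "bij u" using sts_bij[OF s] by auto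
  have s': "ush k (r,u) \<in> sts n" by (rule sts_ush[OF s])
  have "inH2 n (ush k (r,u))" using assms q comm_ush[OF b] unfolding QA_def inH2_def ush_def by auto
  moreover have "periods n (ush k (r,u)) = L"
  proof -
    have "shL k (periods n (ush k (r,u))) = periods n (sh k (ush k (r,u)))"
      using periods_sh[of "fst (ush k (r,u))" "snd (ush k (r,u))" n k] s' by simp
    also have "\<dots> = shL k L" using sh_ush[OF b(1)] assms q unfolding QA_def by simp
    finally show ?thesis by (rule shL_inj)
  qed
  ultimately show ?thesis using s' q unfolding QA_def by auto
qed

lemma iso_sh: "(p1,p2) \<in> sts_iso n \<Longrightarrow> (sh k p1, sh k p2) \<in> sts_iso n"
proof -
  assume a: "(p1,p2) \<in> sts_iso n"
  obtain r1 u1 r2 u2 where p: "p1 = (r1,u1)" "p2 = (r2,u2)" by (cases p1, cases p2)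
  have s: "(r1,u1) \<in> sts n" "(r2,u2) \<in> sts n" using a p sts_iso_iff by auto
  obtain s where "conj_by s n (r1,u1) (r2,u2)" using a p sts_iso_iff by auto
  then have "conj_by s n (sh k (r1,u1)) (sh k (r2,u2))" using conj_sh by blast
  then show ?thesis using p sts_sh s sts_iso_iff by blast
qed

lemma iso_ush: "(p1,p2) \<in> sts_iso n \<Longrightarrow> (ush k p1, ush k p2) \<in> sts_iso n"
proof -
  assume a: "(p1,p2) \<in> sts_iso n"
  obtain r1 u1 r2 u2 where p: "p1 = (r1,u1)" "p2 = (r2,u2)" by (cases p1, cases p2)
  have s: "(r1,u1) \<in> sts n" "(r2,u2) \<in> sts n" using a p sts_iso_iff by auto
  obtain s where "conj_by s n (r1,u1) (r2,u2)" using a p sts_iso_iff by auto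
  then have "conj_by s n (ush k (r1,u1)) (ush k (r2,u2))" using conj_ush sts_bij s by blast
  then show ?thesis using p sts_ush s sts_iso_iff by blast
qed

lemma Q_shear: "card (Q n L) = card (Q n (shL k L))"
proof (rule Q_card_eq[where F = "sh k"])
  show "\<And>p. p \<in> QA n L \<Longrightarrow> sh k p \<in> QA n (shL k L)" by (rule sh_QA)
  show "\<And>p1 p2. (p1,p2) \<in> sts_iso n \<Longrightarrow> (sh k p1, sh k p2) \<in> sts_iso n" by (rule iso_sh)
  show "(p1, p2) \<in> sts_iso n" if "p1 \<in> QA n L" "p2 \<in> QA n L" "(sh k p1, sh k p2) \<in> sts_iso n" for p1 p2
  proof -
    obtain r1 u1 r2 u2 where p: "p1 = (r1,u1)" "p2 = (r2,u2)" by (cases p1, cases p2)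
    have "bij r1" "bij r2" using that p sts_bij unfolding QA_def by auto
    then show ?thesis using iso_ush[OF that(3), of k] p ush_sh by simp
  qed
  fix q assume q: "q \<in> QA n (shL k L)"
  obtain r u where qq: "q = (r,u)" by (cases q)
  have "bij r" using q qq sts_bij unfolding QA_def by auto
  have "ush k q \<in> QA n L" using ush_QA[OF q] .
  moreover have "(sh k (ush k q), q) \<in> sts_iso n" using q equiv_iso sh_ush[OF \<open>bij r\<close>] qq
    unfolding QA_def by (simp add: equiv_def refl_on_def)
  ultimately show "\<exists>p\<in>QA n L. (sh k p, q) \<in> sts_iso n" by blast
qed


section \<open>Stretch\<close>

definition hr :: "nat \<Rightarrow> nat \<Rightarrow> (nat \<Rightarrow> nat) \<Rightarrow> nat \<Rightarrow> nat" where
  "hr m e r k = (if k < m * e then (if k div m + 1 < e then k + m else r (k mod m)) else k)"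

definition hu :: "nat \<Rightarrow> nat \<Rightarrow> (nat \<Rightarrow> nat) \<Rightarrow> nat \<Rightarrow> nat" where
  "hu m e u k = (if k < m * e then u (k mod m) + m * (k div m) else k)"

definition stretch :: "nat \<Rightarrow> nat \<Rightarrow> (nat \<Rightarrow> nat) \<times> (nat \<Rightarrow> nat) \<Rightarrow> (nat \<Rightarrow> nat) \<times> (nat \<Rightarrow> nat)" where
  "stretch m e p = (hr m e (fst p), hu m e (snd p))"

lemma enc_lt: "x < m \<Longrightarrow> i < e \<Longrightarrow> x + m * i < m * (e::nat)"
proof -
  assume a: "x < m" "i < e"
  have "x + m * i < m + m * i" using a by simp
  also have "\<dots> = m * (i + 1)" by (simp add: algebra_simps)
  also have "\<dots> \<le> m * e" using a by (intro mult_le_mono2) simp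
  finally show ?thesis .
qed

lemma enc_mod: "x < m \<Longrightarrow> (x + m * i) mod m = (x::nat)" by simp
lemma enc_div: "x < m \<Longrightarrow> (x + m * i) div m = (i::nat)" by simp

lemma dec: "k < m * (e::nat) \<Longrightarrow> k = k mod m + m * (k div m) \<and> k mod m < m \<and> k div m < e"
proof -
  assume a: "k < m * e"
  then have m: "m > 0" by (cases m) auto
  have "k div m < e" using a m by (simp add: div_less_iff_less_mult mult.commute)
  then show ?thesis using m by simp
qed

lemma decE:
  assumes "k < m * (e::nat)"
  obtains x i where "k = x + m * i" "x < m" "i < e"
  using dec[OF assms] by blast

locale sctx =
  fixes m e :: nat and r u :: "nat \<Rightarrow> nat"
  assumes m: "m > 0" and e: "e > 0"
    and rp: "r permutes {..<m}" and up: "u permutes {..<m}"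
begin

abbreviation "R \<equiv> hr m e r"
abbreviation "U \<equiv> hu m e u"

lemma r_lt: "x < m \<Longrightarrow> r x < m"
  using rp permutes_in_image by (metis lessThan_iff)
lemma u_lt: "x < m \<Longrightarrow> u x < m"
  using up permutes_in_image by (metis lessThan_iff)
lemma br: "bij r" using rp permutes_bij by blast
lemma bu: "bij u" using up permutes_bij by blast
lemma ri_lt: "x < m \<Longrightarrow> inv r x < m"
  using permutes_inv[OF rp] permutes_in_image by (metis lessThan_iff)
lemma ui_lt: "x < m \<Longrightarrow> inv u x < m"
  using permutes_inv[OF up] permutes_in_image by (metis lessThan_iff)

lemma R_enc: "x < m \<Longrightarrow> i < e \<Longrightarrow> R (x + m * i) = (if i + 1 < e then x + m * (i + 1) else r x)"
  unfolding hr_def using enc_lt[of x m i e] by (simp add: algebra_simps)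

lemma U_enc: "x < m \<Longrightarrow> i < e \<Longrightarrow> U (x + m * i) = u x + m * i"
  unfolding hu_def using enc_lt[of x m i e] by simp

lemma R_out: "\<not> k < m * e \<Longrightarrow> R k = k" unfolding hr_def by simp
lemma U_out: "\<not> k < m * e \<Longrightarrow> U k = k" unfolding hu_def by simp

lemma R_lt: "k < m * e \<Longrightarrow> R k < m * e"
proof -
  assume "k < m * e"
  then obtain x i where k: "k = x + m * i" "x < m" "i < e" by (rule decE)
  show ?thesis
  proof (cases "i + 1 < e")
    case True then show ?thesis using k R_enc enc_lt[of x m "i+1" e] by simp
  next
    case False
    have "m \<le> m * e" using e by simp
    then have "r x < m * e" using r_lt[OF k(2)] by linarith
    then show ?thesis using k R_enc False by simp
  qed
qed

lemma U_lt: "k < m * e \<Longrightarrow> U k < m * e"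
proof -
  assume "k < m * e"
  then obtain x i where k: "k = x + m * i" "x < m" "i < e" by (rule decE)
  then show ?thesis using U_enc enc_lt[of "u x" m i e] u_lt by simp
qed

lemma R_inj: "inj_on R {..<m * e}"
proof (rule inj_onI)
  fix k1 k2 assume k1: "k1 \<in> {..<m * e}" and k2: "k2 \<in> {..<m * e}" and eq: "R k1 = R k2"
  obtain x1 i1 where a: "k1 = x1 + m * i1" "x1 < m" "i1 < e" using k1 by (auto elim: decE)
  obtain x2 i2 where b: "k2 = x2 + m * i2" "x2 < m" "i2 < e" using k2 by (auto elim: decE)
  have rx1: "r x1 < m" using r_lt a by blast
  have rx2: "r x2 < m" using r_lt b by blast
  show "k1 = k2"
  proof (cases "i1 + 1 < e"; cases "i2 + 1 < e")
    assume c: "i1 + 1 < e" "i2 + 1 < e"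
    then have h: "x1 + m * (i1 + 1) = x2 + m * (i2 + 1)" using eq a b R_enc by simp
    have "x1 = x2" using arg_cong[OF h, of "\<lambda>k. k mod m"] by (simp only: enc_mod[OF a(2)] enc_mod[OF b(2)])
    moreover have "i1 = i2" using arg_cong[OF h, of "\<lambda>k. k div m"] by (simp only: enc_div[OF a(2)] enc_div[OF b(2)])
    ultimately show ?thesis using a b by simp
  next
    assume c: "i1 + 1 < e" "\<not> i2 + 1 < e"
    then have "x1 + m * (i1 + 1) = r x2" using eq a b R_enc by simp
    then show ?thesis using rx2 by (simp add: algebra_simps)
  next
    assume c: "\<not> i1 + 1 < e" "i2 + 1 < e"
    then have "x2 + m * (i2 + 1) = r x1" using eq a b R_enc by simp
    then show ?thesis using rx1 by (simp add: algebra_simps)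
  next
    assume c: "\<not> i1 + 1 < e" "\<not> i2 + 1 < e"
    then have "r x1 = r x2" using eq a b R_enc by simp
    then have "x1 = x2" using br by (simp add: bij_is_inj inj_eq)
    moreover have "i1 = i2" using c a b by simp
    ultimately show ?thesis using a b by simp
  qed
qed

lemma U_inj: "inj_on U {..<m * e}"
proof (rule inj_onI)
  fix k1 k2 assume k1: "k1 \<in> {..<m * e}" and k2: "k2 \<in> {..<m * e}" and eq: "U k1 = U k2"
  obtain x1 i1 where a: "k1 = x1 + m * i1" "x1 < m" "i1 < e" using k1 by (auto elim: decE)
  obtain x2 i2 where b: "k2 = x2 + m * i2" "x2 < m" "i2 < e" using k2 by (auto elim: decE)
  have h: "u x1 + m * i1 = u x2 + m * i2" using eq a b U_enc by simp
  have "u x1 = u x2" using arg_cong[OF h, of "\<lambda>k. k mod m"] by (simp only: enc_mod[OF u_lt[OF a(2)]] enc_mod[OF u_lt[OF b(2)]])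
  then have "x1 = x2" using bu by (simp add: bij_is_inj inj_eq)
  moreover have "i1 = i2" using arg_cong[OF h, of "\<lambda>k. k div m"] by (simp only: enc_div[OF u_lt[OF a(2)]] enc_div[OF u_lt[OF b(2)]])
  ultimately show "k1 = k2" using a b by simp
qed

lemma endo_permutes:
  assumes "inj_on f {..<N}" "\<And>k. k < N \<Longrightarrow> f k < N" "\<And>k. \<not> k < N \<Longrightarrow> f k = k"
  shows "f permutes {..<(N::nat)}"
proof (rule bij_imp_permutes)
  have "f ` {..<N} \<subseteq> {..<N}" using assms(2) by auto
  then have "f ` {..<N} = {..<N}" using endo_inj_surj[of "{..<N}" f] assms(1) by simp
  then show "bij_betw f {..<N} {..<N}" using assms(1) by (simp add: bij_betw_def)
  show "\<And>x. x \<notin> {..<N} \<Longrightarrow> f x = x" using assms(3) by simp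
qed

lemma R_perm: "R permutes {..<m * e}"
  by (rule endo_permutes[OF R_inj R_lt R_out])

lemma U_perm: "U permutes {..<m * e}"
  by (rule endo_permutes[OF U_inj U_lt U_out])

lemma bR: "bij R" using R_perm permutes_bij by blast
lemma bU: "bij U" using U_perm permutes_bij by blast

lemma Ri_enc: "x < m \<Longrightarrow> i < e \<Longrightarrow> inv R (x + m * i) = (if 0 < i then x + m * (i - 1) else inv r x + m * (e - 1))"
proof -
  assume a: "x < m" "i < e"
  show ?thesis
  proof (cases "0 < i")
    case True
    have "R (x + m * (i - 1)) = x + m * i" using R_enc[OF a(1), of "i - 1"] a True by simp
    then show ?thesis using True bif1[OF bR] by metis
  next
    case False
    have "R (inv r x + m * (e - 1)) = x" using R_enc[OF ri_lt[OF a(1)], of "e - 1"] e bif2[OF br] by simp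
    then show ?thesis using False bif1[OF bR] by (metis add.right_neutral mult_0_right not_gr0)
  qed
qed

lemma Ui_enc: "x < m \<Longrightarrow> i < e \<Longrightarrow> inv U (x + m * i) = inv u x + m * i"
proof -
  assume a: "x < m" "i < e"
  have "U (inv u x + m * i) = x + m * i" using U_enc[OF ui_lt[OF a(1)] a(2)] bif2[OF bu] by simp
  then show ?thesis using bif1[OF bU] by metis
qed

end


context sctx
begin

lemma R_pow: "x < m \<Longrightarrow> i + j < e \<Longrightarrow> (R ^^ j) (x + m * i) = x + m * (i + j)"
proof (induction j)
  case 0 then show ?case by simp
next
  case (Suc j)
  then have "(R ^^ Suc j) (x + m * i) = R (x + m * (i + j))" by simp
  also have "\<dots> = x + m * (i + Suc j)" using R_enc[of x "i + j"] Suc.prems by simp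
  finally show ?case .
qed

lemma R_pow_e: "x < m \<Longrightarrow> (R ^^ e) x = r x"
proof -
  assume x: "x < m"
  have "(R ^^ (e - 1)) (x + m * 0) = x + m * (0 + (e - 1))" using R_pow[OF x, of 0 "e - 1"] e by simp
  then have "(R ^^ (e - 1)) x = x + m * (e - 1)" by simp
  moreover have "(R ^^ e) x = R ((R ^^ (e - 1)) x)"
  proof -
    have "e = Suc (e - 1)" using e by simp
    then show ?thesis by (metis funpow.simps(2) o_apply)
  qed
  moreover have "R (x + m * (e - 1)) = r x" using R_enc[OF x, of "e - 1"] e by simp
  ultimately show ?thesis by simp
qed

lemma U_layer0: "x < m \<Longrightarrow> U x = u x"
  using U_enc[of x 0] e by simp

lemma comm_enc:
  assumes x: "x < m" and i: "i < e"
  shows "comm R U (x + m * i) = (if i = 0 then comm r u x else x + m * i)"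
proof (cases "i = 0")
  case False
  define z where "z = inv u x + m * (i - 1)"
  have zl: "inv u x < m" using ui_lt[OF x] .
  have "U z = x + m * (i - 1)" unfolding z_def using U_enc[OF zl, of "i - 1"] i bif2[OF bu] by simp
  then have Rz: "R (U z) = x + m * i" using R_enc[OF x, of "i - 1"] i False by simp
  have "R z = inv u x + m * i" unfolding z_def using R_enc[OF zl, of "i - 1"] i False by simp
  then have "U (R z) = x + m * i" using U_enc[OF zl i] bif2[OF bu] by simp
  then have "comm R U (x + m * i) = x + m * i" using comm_char[OF bR bU, of z] Rz by simp
  then show ?thesis using False by simp
next
  case True
  define z where "z = inv u (inv r x) + m * (e - 1)"
  have zl: "inv u (inv r x) < m" using ui_lt[OF ri_lt[OF x]] .
  have "U z = inv r x + m * (e - 1)" unfolding z_def using U_enc[OF zl, of "e - 1"] e bif2[OF bu] by simp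
  then have Rz: "R (U z) = x" using R_enc[OF ri_lt[OF x], of "e - 1"] e bif2[OF br] by simp
  have "R z = r (inv u (inv r x))" unfolding z_def using R_enc[OF zl, of "e - 1"] e by simp
  then have "U (R z) = u (r (inv u (inv r x)))" using U_layer0 r_lt[OF zl] by simp
  then have "comm R U x = comm r u x" using comm_char[OF bR bU, of z] Rz by (simp add: comm_apply)
  then show ?thesis using True by simp
qed

lemma cone_set: "{k. k < m * e \<and> comm R U k \<noteq> k} = {x. x < m \<and> comm r u x \<noteq> x}"
proof (rule set_eqI, rule iffI)
  fix k assume "k \<in> {k. k < m * e \<and> comm R U k \<noteq> k}"
  then have k: "k < m * e" "comm R U k \<noteq> k" by auto
  then obtain x i where ki: "k = x + m * i" "x < m" "i < e" by (auto elim: decE)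
  have "i = 0"
  proof (rule ccontr)
    assume "i \<noteq> 0"
    then show False using comm_enc[OF ki(2,3)] k ki by simp
  qed
  then show "k \<in> {x. x < m \<and> comm r u x \<noteq> x}" using k ki comm_enc[of x 0] e by simp
next
  fix x assume "x \<in> {x. x < m \<and> comm r u x \<noteq> x}"
  then have x: "x < m" "comm r u x \<noteq> x" by auto
  have "m \<le> m * e" using e by simp
  then have "x < m * e" using x by linarith
  moreover have "comm R U x = comm r u x" using comm_enc[OF x(1), of 0] e by simp
  ultimately show "x \<in> {k. k < m * e \<and> comm R U k \<noteq> k}" using x by simp
qed

lemma inH2_stretch: "inH2 (m * e) (R, U) \<longleftrightarrow> inH2 m (r, u)"
  unfolding inH2_iff cone_set ..

lemma reach_stretch:
  assumes "(r,u) \<in> sts m"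
  shows "(R,U) \<in> sts (m * e)"
proof -
  have me: "m \<le> m * e" using e by simp
  let ?H = "reachrel (m * e) R U"
  have l0: "(x, y) \<in> ?H\<^sup>*" if "x < m" "y < m" for x y
  proof (rule reach_transfer[of m r ?H u])
    show "(x, y) \<in> (reachrel m r u)\<^sup>*" using assms that sts_iff by blast
    fix z assume z: "z < m"
    then have "z < m * e" using me by linarith
    from reach_rpow[where u = U, OF R_perm this, of e] show "(z, r z) \<in> ?H\<^sup>*" using R_pow_e[OF z] by simp
    from reach_step_u[where r = R and u = U, OF \<open>z < m * e\<close>] show "(z, u z) \<in> ?H\<^sup>*" using U_layer0[OF z] by simp
  qed
  have "(k1, k2) \<in> ?H\<^sup>*" if k12: "k1 < m * e" "k2 < m * e" for k1 k2
  proof -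
    obtain x i where a: "k1 = x + m * i" "x < m" "i < e" using k12(1) by (auto elim: decE)
    obtain y j where b: "k2 = y + m * j" "y < m" "j < e" using k12(2) by (auto elim: decE)
    have s1: "(k1, (R ^^ (e - 1 - i)) k1) \<in> ?H\<^sup>*" by (rule reach_rpow[OF R_perm k12(1)])
    have s1e: "(R ^^ (e - 1 - i)) k1 = x + m * (e - 1)" using R_pow[OF a(2), of i "e - 1 - i"] a by simp
    have s2: "(x + m * (e - 1), R (x + m * (e - 1))) \<in> ?H\<^sup>*"
      by (rule reach_step_r) (use enc_lt[OF a(2), of "e - 1" e] e in simp)
    have s2e: "R (x + m * (e - 1)) = r x" using R_enc[OF a(2), of "e - 1"] e by simp
    have s3: "(r x, y) \<in> ?H\<^sup>*" using l0 r_lt a b by blast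
    have s4: "(y, (R ^^ j) y) \<in> ?H\<^sup>*" by (rule reach_rpow[OF R_perm]) (use b me in linarith)
    have s4e: "(R ^^ j) y = k2" using R_pow[OF b(2), of 0 j] b by simp
    have "(k1, r x) \<in> ?H\<^sup>*" using rtrancl_trans[OF s1[unfolded s1e] s2[unfolded s2e]] .
    then have "(k1, y) \<in> ?H\<^sup>*" using rtrancl_trans[OF _ s3] by blast
    then show ?thesis using rtrancl_trans[OF _ s4] s4e by simp
  qed
  then show ?thesis unfolding sts_iff using R_perm U_perm by blast
qed

end


definition scaleL :: "nat \<Rightarrow> (int \<times> int) set \<Rightarrow> (int \<times> int) set" where
  "scaleL e L = {(x,y). int e dvd x \<and> (x div int e, y) \<in> L}"

lemma scaleL_inj: "e > 0 \<Longrightarrow> scaleL e A = scaleL e B \<Longrightarrow> A = B"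
proof -
  assume e: "e > 0" and eq: "scaleL e A = scaleL e B"
  have "(a,b) \<in> A \<longleftrightarrow> (a,b) \<in> B" for a b
  proof -
    have "(int e * a, b) \<in> scaleL e A \<longleftrightarrow> (int e * a, b) \<in> scaleL e B" using eq by simp
    then show ?thesis unfolding scaleL_def using e by simp
  qed
  then show "A = B" by auto
qed

context sctx
begin

lemma Ri_pow_e: "x < m \<Longrightarrow> (inv R ^^ e) x = inv r x"
proof -
  assume x: "x < m"
  have "(R ^^ e) (inv r x) = x" using R_pow_e[OF ri_lt[OF x]] bif2[OF br] by simp
  then show ?thesis using funpow_inv_cancel(1)[OF bR, of e "inv r x"] by simp
qed

lemma Ui_layer0: "x < m \<Longrightarrow> inv U x = inv u x"
  using Ui_enc[of x 0] e by simp

lemma wp_lift: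
  assumes "wp r u x y a b" "x < m"
  shows "y < m \<and> wp R U x y (int e * a) b"
  using assms
proof (induction rule: wp.induct)
  case (wp_refl i) then show ?case by (simp add: wp.wp_refl)
next
  case (wp_r i j a b)
  then have j: "j < m" and p: "wp R U i j (int e * a) b" by auto
  from wp_trans[OF wp_rpow[of R U j e] p] have "wp R U i (r j) (int e * a + int e) b"
    using R_pow_e[OF j] by simp
  then have "wp R U i (r j) (int e * (a + 1)) b" by (rule wp_cong) (simp_all add: algebra_simps)
  then show ?case using r_lt[OF j] by simp
next
  case (wp_l i j a b)
  then have j: "j < m" and p: "wp R U i j (int e * a) b" by auto
  from wp_trans[OF wp_rinvpow[of R U j e] p] have "wp R U i (inv r j) (int e * a + - int e) b"
    using Ri_pow_e[OF j] by simp
  then have "wp R U i (inv r j) (int e * (a - 1)) b" by (rule wp_cong) (simp_all add: algebra_simps)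
  then show ?case using ri_lt[OF j] by simp
next
  case (wp_u i j a b)
  then have j: "j < m" and p: "wp R U i j (int e * a) b" by auto
  from wp.wp_u[OF p] show ?case using u_lt[OF j] U_layer0[OF j] by simp
next
  case (wp_d i j a b)
  then have j: "j < m" and p: "wp R U i j (int e * a) b" by auto
  from wp.wp_d[OF p] show ?case using ui_lt[OF j] Ui_layer0[OF j] by simp
qed

lemma wp_proj:
  assumes "wp R U k0 k A B" "x0 < m" "i0 < e" "k0 = x0 + m * i0"
  shows "\<exists>y j a. k = y + m * j \<and> y < m \<and> j < e \<and> A = int e * a + int j - int i0 \<and> wp r u x0 y a B"
  using assms
proof (induction rule: wp.induct)
  case (wp_refl i)
  have "i = x0 + m * i0 \<and> x0 < m \<and> i0 < e \<and> (0::int) = int e * 0 + int i0 - int i0 \<and> wp r u x0 x0 0 0"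
    using wp_refl by (simp add: wp.wp_refl)
  then show ?case by blast
next
  case (wp_r i k A B)
  then obtain y j a where h: "k = y + m * j" "y < m" "j < e" "A = int e * a + int j - int i0" "wp r u x0 y a B"
    by blast
  show ?case
  proof (cases "j + 1 < e")
    case True
    then have k': "R k = y + m * (j + 1)" using R_enc h by simp
    have A': "A + 1 = int e * a + int (j + 1) - int i0" using h(4) by simp
    show ?thesis using k' h(2) True A' h(5) by blast
  next
    case False
    then have jj: "j = e - 1" using h by simp
    have k': "R k = r y + m * 0" using R_enc h False by simp
    have ie: "int (e - 1) = int e - 1" using e by simp
    have A': "A + 1 = int e * (a + 1) + int 0 - int i0" using h(4) jj ie by (simp add: algebra_simps)
    have w: "wp r u x0 (r y) (a + 1) B" using wp.wp_r[OF h(5)] .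
    show ?thesis using k' r_lt[OF h(2)] e A' w by blast
  qed
next
  case (wp_l i k A B)
  then obtain y j a where h: "k = y + m * j" "y < m" "j < e" "A = int e * a + int j - int i0" "wp r u x0 y a B"
    by blast
  show ?case
  proof (cases "0 < j")
    case True
    then have k': "inv R k = y + m * (j - 1)" using Ri_enc h by simp
    have jl: "j - 1 < e" using h by simp
    have ij: "int (j - 1) = int j - 1" using True by simp
    have A': "A - 1 = int e * a + int (j - 1) - int i0" using h(4) ij by simp
    show ?thesis using k' h(2) jl A' h(5) by blast
  next
    case False
    then have j0: "j = 0" by simp
    have k': "inv R k = inv r y + m * (e - 1)" using Ri_enc[OF h(2) h(3)] h(1) j0 by simp
    have ie: "int (e - 1) = int e - 1" using e by simp
    have A': "A - 1 = int e * (a - 1) + int (e - 1) - int i0" using h(4) j0 ie by (simp add: algebra_simps)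
    have w: "wp r u x0 (inv r y) (a - 1) B" using wp.wp_l[OF h(5)] .
    have el: "e - 1 < e" using e by simp
    show ?thesis using k' ri_lt[OF h(2)] el A' w by blast
  qed
next
  case (wp_u i k A B)
  then obtain y j a where h: "k = y + m * j" "y < m" "j < e" "A = int e * a + int j - int i0" "wp r u x0 y a B"
    by blast
  have k': "U k = u y + m * j" using U_enc h by simp
  have A': "A = int e * a + int j - int i0" using h by simp
  show ?case using k' h(3) u_lt[OF h(2)] A' wp.wp_u[OF h(5)] by blast
next
  case (wp_d i k A B)
  then obtain y j a where h: "k = y + m * j" "y < m" "j < e" "A = int e * a + int j - int i0" "wp r u x0 y a B"
    by blast
  have k': "inv U k = inv u y + m * j" using Ui_enc h by simp
  have A': "A = int e * a + int j - int i0" using h by simp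
  show ?case using k' h(3) ui_lt[OF h(2)] A' wp.wp_d[OF h(5)] by blast
qed

lemma layer0_unique: "y < m \<Longrightarrow> y' < m \<Longrightarrow> y = y' + m * j \<Longrightarrow> j = 0 \<and> y' = y"
proof -
  assume a: "y < m" "y' < m" "y = y' + m * j"
  have "j = 0"
  proof (rule ccontr)
    assume "j \<noteq> 0"
    then have "m \<le> m * j" by simp
    then show False using a by linarith
  qed
  then show ?thesis using a by simp
qed

lemma wp_proj0:
  assumes "wp R U x y A B" "x < m" "y < m"
  shows "\<exists>a. A = int e * a \<and> wp r u x y a B"
proof -
  obtain y' j a where h: "y = y' + m * j" "y' < m" "j < e" "A = int e * a + int j - int 0" "wp r u x y' a B"
    using wp_proj[OF assms(1,2), of 0] e by auto
  then have "j = 0" "y' = y" using layer0_unique assms(3) by blast+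
  then show ?thesis using h by auto
qed

lemma periods_stretch:
  assumes "(r,u) \<in> sts m"
  shows "periods (m * e) (R,U) = scaleL e (periods m (r,u))"
proof -
  have b: "bij r" "bij u" using br bu by auto
  have me: "m \<le> m * e" using e by simp
  have cs: "(k < m * e \<and> comm R U k \<noteq> k) \<longleftrightarrow> (k < m \<and> comm r u k \<noteq> k)" for k
    using cone_set by blast
  show ?thesis
  proof (rule set_eqI, clarify)
    fix A B
    show "(A,B) \<in> periods (m * e) (R,U) \<longleftrightarrow> (A,B) \<in> scaleL e (periods m (r,u))"
    proof
      assume "(A,B) \<in> periods (m * e) (R,U)"
      then obtain x y where xy: "x < m * e" "y < m * e" "comm R U x \<noteq> x" "comm R U y \<noteq> y" "wp R U x y A B"
        unfolding periods_def using ep_iff[OF bR bU] by auto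
      then have xy': "x < m" "y < m" "comm r u x \<noteq> x" "comm r u y \<noteq> y" using cs by blast+
      obtain a where "A = int e * a" "wp r u x y a B" using wp_proj0[OF xy(5) xy'(1,2)] by blast
      then show "(A,B) \<in> scaleL e (periods m (r,u))"
        unfolding scaleL_def periods_def using xy' ep_iff[OF b] e by auto
    next
      assume "(A,B) \<in> scaleL e (periods m (r,u))"
      then obtain x y where xy: "x < m" "y < m" "comm r u x \<noteq> x" "comm r u y \<noteq> y"
        "wp r u x y (A div int e) B" "int e dvd A"
        unfolding periods_def scaleL_def using ep_iff[OF b] by auto
      then have xy': "x < m * e" "y < m * e" "comm R U x \<noteq> x" "comm R U y \<noteq> y" using cs by blast+
      have "wp R U x y (int e * (A div int e)) B" using wp_lift[OF xy(5,1)] by blast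
      then have "wp R U x y A B" using xy(6) by simp
      then show "(A,B) \<in> periods (m * e) (R,U)"
        unfolding periods_def using xy' ep_iff[OF bR bU] by auto
    qed
  qed
qed

end


lemma endo_permutes':
  assumes "inj_on f {..<N}" "\<And>k. k < N \<Longrightarrow> f k < N" "\<And>k. \<not> k < N \<Longrightarrow> f k = k"
  shows "f permutes {..<(N::nat)}"
proof (rule bij_imp_permutes)
  have "f ` {..<N} \<subseteq> {..<N}" using assms(2) by auto
  then have "f ` {..<N} = {..<N}" using endo_inj_surj[of "{..<N}" f] assms(1) by simp
  then show "bij_betw f {..<N} {..<N}" using assms(1) by (simp add: bij_betw_def)
  show "\<And>x. x \<notin> {..<N} \<Longrightarrow> f x = x" using assms(3) by simp
qed

lemma conj_reach:
  assumes "conj_by s n (r1,u1) (r2,u2)" "(i,j) \<in> (reachrel n r1 u1)\<^sup>*"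
  shows "(s i, s j) \<in> (reachrel n r2 u2)\<^sup>*"
  using assms(2)
proof (induction rule: rtrancl_induct)
  case base then show ?case by simp
next
  case (step y z)
  have sp: "s permutes {..<n}" and r: "\<And>x. s (r1 x) = r2 (s x)" and u: "\<And>x. s (u1 x) = u2 (s x)"
    using assms(1) unfolding conj_by_def by auto
  from step(2) have y: "y < n" and z: "z = r1 y \<or> z = u1 y" unfolding reachrel_def by auto
  have "s y < n" using y sp permutes_in_image by (metis lessThan_iff)
  then have "(s y, s z) \<in> reachrel n r2 u2" using z r u unfolding reachrel_def by auto
  with step.IH show ?case by simp
qed

lemma conj_sts:
  assumes "conj_by s n (r1,u1) (r2,u2)" "(r1,u1) \<in> sts n" "r2 permutes {..<n}" "u2 permutes {..<n}"
  shows "(r2,u2) \<in> sts n"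
proof -
  have sp: "s permutes {..<n}" using assms(1) conj_by_def by auto
  have "(i,j) \<in> (reachrel n r2 u2)\<^sup>*" if "i < n" "j < n" for i j
  proof -
    have "inv s i < n" "inv s j < n" using that sp by (metis lessThan_iff permutes_in_image permutes_inv)+
    then have "(inv s i, inv s j) \<in> (reachrel n r1 u1)\<^sup>*" using assms(2) sts_iff by blast
    from conj_reach[OF assms(1) this] show ?thesis using sp permutes_inverses(1) by metis
  qed
  then show ?thesis using assms(3,4) sts_iff by blast
qed

context sctx
begin

lemma sts_proj_reach:
  assumes "(k, k') \<in> (reachrel (m * e) R U)\<^sup>*"
  shows "(k mod m, k' mod m) \<in> (reachrel m r u)\<^sup>*"
  using assms
proof (induction rule: rtrancl_induct)
  case base then show ?case by simp
next
  case (step y z)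
  from step(2) have y: "y < m * e" and z: "z = R y \<or> z = U y" unfolding reachrel_def by auto
  obtain x i where yi: "y = x + m * i" "x < m" "i < e" using y by (auto elim: decE)
  have "z mod m = x \<or> z mod m = r x \<or> z mod m = u x"
  proof (cases "z = R y")
    case True
    then have zR: "z = (if i + 1 < e then x + m * (i + 1) else r x)" using R_enc[OF yi(2,3)] yi by simp
    show ?thesis
    proof (cases "i + 1 < e")
      case True
      then have "z = x + m * (i + 1)" using zR by simp
      then have "z mod m = x" by (simp only: enc_mod[OF yi(2)])
      then show ?thesis by simp
    next
      case False
      then have "z = r x" using zR by simp
      then show ?thesis using r_lt[OF yi(2)] by simp
    qed
  next
    case False
    then have "z = U y" using z by simp
    then have "z = u x + m * i" using U_enc[OF yi(2,3)] yi by simp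
    then have "z mod m = u x" by (simp only: enc_mod[OF u_lt[OF yi(2)]])
    then show ?thesis by simp
  qed
  moreover have "y mod m = x" using yi by simp
  ultimately have "(y mod m, z mod m) \<in> (reachrel m r u)\<^sup>*"
    using reach_step_r[OF yi(2), of r u] reach_step_u[OF yi(2), of u r] by auto
  with step.IH show ?case by simp
qed

lemma sts_proj:
  assumes "(R,U) \<in> sts (m * e)"
  shows "(r,u) \<in> sts m"
proof -
  have "m \<le> m * e" using e by simp
  have "(x,y) \<in> (reachrel m r u)\<^sup>*" if "x < m" "y < m" for x y
  proof -
    have "(x,y) \<in> (reachrel (m * e) R U)\<^sup>*" using assms that \<open>m \<le> m * e\<close> sts_iff
      by (metis less_le_trans)
    from sts_proj_reach[OF this] show ?thesis using that by simp
  qed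
  then show ?thesis using rp up sts_iff by blast
qed

end

lemma conj_stretch:
  assumes "sctx m e r1 u1" "sctx m e r2 u2" "conj_by s m (r1,u1) (r2,u2)"
  shows "conj_by (hu m e s) (m * e) (stretch m e (r1,u1)) (stretch m e (r2,u2))"
proof -
  interpret A: sctx m e r1 u1 by fact
  interpret B: sctx m e r2 u2 by fact
  have sp: "s permutes {..<m}" and r: "\<And>x. s (r1 x) = r2 (s x)" and u: "\<And>x. s (u1 x) = u2 (s x)"
    using assms(3) unfolding conj_by_def by auto
  interpret C: sctx m e r1 s using A.m A.e A.rp sp by unfold_locales
  have sl: "x < m \<Longrightarrow> s x < m" for x using C.u_lt by blast
  have "hu m e s (hr m e r1 k) = hr m e r2 (hu m e s k) \<and> hu m e s (hu m e u1 k) = hu m e u2 (hu m e s k)" for k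
  proof (cases "k < m * e")
    case True
    then obtain x i where k: "k = x + m * i" "x < m" "i < e" by (auto elim: decE)
    have 1: "hu m e s (hr m e r1 k) = hr m e r2 (hu m e s k)"
    proof (cases "i + 1 < e")
      case True
      have "hr m e r1 k = x + m * (i + 1)" using A.R_enc[OF k(2,3)] k(1) True by simp
      then have "hu m e s (hr m e r1 k) = s x + m * (i + 1)" using C.U_enc[OF k(2) True] by simp
      moreover have "hu m e s k = s x + m * i" using C.U_enc[OF k(2,3)] k(1) by simp
      moreover have "hr m e r2 (s x + m * i) = s x + m * (i + 1)" using B.R_enc[OF sl[OF k(2)] k(3)] True by simp
      ultimately show ?thesis by simp
    next
      case False
      then show ?thesis using k A.R_enc B.R_enc C.U_enc[of "r1 x" 0] C.U_enc sl A.r_lt r A.e by simp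
    qed
    have 2: "hu m e s (hu m e u1 k) = hu m e u2 (hu m e s k)"
      using k A.U_enc B.U_enc C.U_enc sl A.u_lt u by simp
    show ?thesis using 1 2 by blast
  next
    case False
    then show ?thesis using A.R_out A.U_out B.R_out B.U_out C.U_out by simp
  qed
  then show ?thesis unfolding conj_by_def stretch_def using C.U_perm by simp
qed

lemma cone_layer0:
  assumes "sctx m e r u" "k < m * e" "comm (hr m e r) (hu m e u) k \<noteq> k"
  shows "k < m" "comm r u k \<noteq> k"
proof -
  interpret A: sctx m e r u by fact
  show "k < m" "comm r u k \<noteq> k" using A.cone_set assms(2,3) by blast+
qed

lemma conj_stretch_refl:
  assumes "sctx m e r1 u1" "sctx m e r2 u2" "(r1,u1) \<in> sts m" "inH2 m (r1,u1)"
    and "conj_by t (m * e) (stretch m e (r1,u1)) (stretch m e (r2,u2))"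
  shows "\<exists>s. conj_by s m (r1,u1) (r2,u2)"
proof -
  interpret A: sctx m e r1 u1 by fact
  interpret B: sctx m e r2 u2 by fact
  have tc: "conj_by t (m * e) (A.R, A.U) (B.R, B.U)" using assms(5) unfolding stretch_def by simp
  have tp: "t permutes {..<m * e}" and tr: "\<And>x. t (A.R x) = B.R (t x)" and tu: "\<And>x. t (A.U x) = B.U (t x)"
    using tc unfolding conj_by_def by auto
  have me: "m \<le> m * e" using A.e by simp
  obtain c1 where c1: "c1 < m" "comm r1 u1 c1 \<noteq> c1" using cone_exists[OF assms(4)] by blast
  have c1H: "c1 < m * e" using c1 me by linarith
  have "comm A.R A.U c1 = comm r1 u1 c1" using A.comm_enc[OF c1(1), of 0] A.e by simp
  then have "comm A.R A.U c1 \<noteq> c1" using c1 by simp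
  moreover have "t (comm A.R A.U c1) = comm B.R B.U (t c1)"
    by (rule conj_comm[OF tc A.bR A.bU B.bR B.bU])
  moreover have "inj t" using tp permutes_inj by blast
  ultimately have "comm B.R B.U (t c1) \<noteq> t c1" by (metis injD)
  moreover have "t c1 < m * e" using c1H tp by (metis lessThan_iff permutes_in_image)
  ultimately have tc1: "t c1 < m" using cone_layer0[OF assms(2)] by blast
  have tl: "t x < m" if x: "x < m" for x
  proof -
    obtain a b where "wp r1 u1 c1 x a b" using sts_wp[OF assms(3) c1(1) x] by blast
    then have "wp A.R A.U c1 x (int e * a) b" using A.wp_lift c1 by blast
    then have "wp B.R B.U (t c1) (t x) (int e * a) b" using conj_wp[OF tc A.bR A.bU B.bR B.bU] by blast
    then obtain y j a' where h: "t x = y + m * j" "y < m" "j < e" "int e * a = int e * a' + int j - int 0"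
      using B.wp_proj[of "t c1" "t x" _ _ "t c1" 0] tc1 A.e by fastforce
    have "int e dvd int j" using h(4) by (metis add_diff_cancel_left' diff_zero dvd_diff dvd_triv_left of_nat_0)
    then have "e dvd j" by simp
    then have "j = 0" using h(3) by (metis dvd_imp_le le_neq_implies_less linorder_not_le nat_dvd_not_less neq0_conv)
    then show ?thesis using h by simp
  qed
  define s where "s k = (if k < m then t k else k)" for k
  have "inj_on s {..<m}"
  proof (rule inj_onI)
    fix a b assume "a \<in> {..<m}" "b \<in> {..<m}" "s a = s b"
    then have "t a = t b" unfolding s_def by simp
    then show "a = b" using \<open>inj t\<close> by (simp add: inj_eq)
  qed
  then have sp: "s permutes {..<m}" by (rule endo_permutes') (auto simp: s_def tl)
  have "s (r1 x) = r2 (s x) \<and> s (u1 x) = u2 (s x)" for x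
  proof (cases "x < m")
    case True
    have xH: "x < m * e" using True me by linarith
    have "t ((A.R ^^ e) x) = (B.R ^^ e) (t x)" using conj_pow[of t A.R B.R, OF tr] .
    then have 1: "t (r1 x) = r2 (t x)" using A.R_pow_e[OF True] B.R_pow_e[OF tl[OF True]] by simp
    have 2: "t (u1 x) = u2 (t x)" using tu[of x] A.U_layer0[OF True] B.U_layer0[OF tl[OF True]] by simp
    show ?thesis using 1 2 True tl A.r_lt A.u_lt unfolding s_def by simp
  next
    case False
    have "r1 x = x" "u1 x = x" "r2 x = x" "u2 x = x" using False A.rp A.up B.rp B.up by (auto simp: permutes_def)
    then show ?thesis using False unfolding s_def by simp
  qed
  then have "conj_by s m (r1,u1) (r2,u2)" unfolding conj_by_def using sp by simp
  then show ?thesis by blast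
qed


locale sctx2 =
  fixes n e :: nat and r u :: "nat \<Rightarrow> nat" and c0 :: nat
  assumes S: "(r,u) \<in> sts n" and H2: "inH2 n (r,u)" and e: "e > 0"
    and dv: "\<And>A B. (A,B) \<in> periods n (r,u) \<Longrightarrow> int e dvd A"
    and c0: "c0 < n" and cc: "comm r u c0 \<noteq> c0"
begin

lemma rp: "r permutes {..<n}" and up: "u permutes {..<n}" using sts_perm[OF S] by auto
lemma br: "bij r" and bu: "bij u" using sts_bij[OF S] by auto

lemma per: "periods n (r,u) = {(a,b). wp r u c0 c0 a b}" by (rule per_loops[OF S H2 c0 cc])

lemma r_lt: "y < n \<Longrightarrow> r y < n" using rp permutes_in_image by (metis lessThan_iff)
lemma u_lt: "y < n \<Longrightarrow> u y < n" using up permutes_in_image by (metis lessThan_iff)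
lemma rpow_lt: "y < n \<Longrightarrow> (r ^^ j) y < n" using permutes_funpow[OF rp] permutes_in_image by (metis lessThan_iff)
lemma ripow_lt: "y < n \<Longrightarrow> (inv r ^^ j) y < n"
  using permutes_funpow[OF permutes_inv[OF rp]] permutes_in_image by (metis lessThan_iff)

definition phi :: "nat \<Rightarrow> int" where
  "phi y = (SOME A. \<exists>B. wp r u c0 y A B) mod int e"

lemma phi_eq:
  assumes "wp r u c0 y A B"
  shows "phi y = A mod int e"
proof -
  let ?A = "SOME A. \<exists>B. wp r u c0 y A B"
  have "\<exists>B. wp r u c0 y ?A B" using someI_ex[of "\<lambda>A. \<exists>B. wp r u c0 y A B"] assms by blast
  then obtain B' where B': "wp r u c0 y ?A B'" by blast
  have "wp r u c0 c0 (A + - ?A) (B + - B')" by (rule wp_trans[OF wp_rev[OF br bu B'] assms])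
  then have "(A + - ?A, B + - B') \<in> periods n (r,u)" using per by simp
  then have "int e dvd A - ?A" using dv by simp
  then have "A mod int e = ?A mod int e" by (simp add: mod_eq_dvd_iff)
  then show ?thesis unfolding phi_def by simp
qed

lemma ex_wp: "y < n \<Longrightarrow> \<exists>A B. wp r u c0 y A B" using sts_wp[OF S c0] by blast

lemma cone_phi: "c < n \<Longrightarrow> comm r u c \<noteq> c \<Longrightarrow> phi c = 0"
  using phi_eq[OF cone_wp[OF S H2 c0 cc]] by simp

definition X0 :: "nat set" where "X0 = {y. y < n \<and> phi y = 0}"

lemma X0_fin: "finite X0" unfolding X0_def by auto

lemma phi_pow:
  assumes "y \<in> X0" "j < e"
  shows "phi ((r ^^ j) y) = int j"
proof -
  have "y < n" using assms X0_def by simp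
  then obtain A B where w: "wp r u c0 y A B" using ex_wp by blast
  have A0: "A mod int e = 0" using phi_eq[OF w] assms X0_def by simp
  have "wp r u c0 ((r ^^ j) y) (A + int j) (B + 0)" by (rule wp_trans[OF wp_rpow w])
  then have "phi ((r ^^ j) y) = (A + int j) mod int e" using phi_eq by simp
  also have "\<dots> = (A mod int e + int j) mod int e" by (simp add: mod_add_left_eq)
  also have "\<dots> = int j" using A0 assms(2) by simp
  finally show ?thesis .
qed

abbreviation "g \<equiv> (\<lambda>(y,j). (r ^^ j) y)"

lemma g_bij: "bij_betw g (X0 \<times> {..<e}) {..<n}"
proof (rule bij_betw_imageI)
  show "inj_on g (X0 \<times> {..<e})"
  proof (rule inj_onI)
    fix p q assume pq: "p \<in> X0 \<times> {..<e}" "q \<in> X0 \<times> {..<e}" "g p = g q"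
    obtain y j y' j' where yj: "p = (y,j)" "q = (y',j')" by (cases p, cases q)
    have a: "y \<in> X0" "j < e" "y' \<in> X0" "j' < e" "(r ^^ j) y = (r ^^ j') y'" using pq yj by auto
    have "int j = int j'" using phi_pow[of y j] phi_pow[of y' j'] a by simp
    then have "j = j'" by simp
    moreover then have "y = y'" using a(5) bij_funpow[OF br, of j] by (simp add: bij_is_inj inj_eq)
    ultimately show "p = q" using yj by simp
  qed
  show "g ` (X0 \<times> {..<e}) = {..<n}"
  proof
    show "g ` (X0 \<times> {..<e}) \<subseteq> {..<n}" using rpow_lt X0_def by auto
    show "{..<n} \<subseteq> g ` (X0 \<times> {..<e})"
    proof
      fix z assume "z \<in> {..<n}"
      then have z: "z < n" by simp
      obtain A B where w: "wp r u c0 z A B" using ex_wp[OF z] by blast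
      define j where "j = nat (A mod int e)"
      have ij: "int j = A mod int e" unfolding j_def using e by simp
      have jl: "j < e" unfolding j_def using e by (simp add: nat_less_iff)
      define y where "y = (inv r ^^ j) z"
      have "wp r u c0 y (A + - int j) (B + 0)" unfolding y_def by (rule wp_trans[OF wp_rinvpow w])
      then have "phi y = (A - int j) mod int e" using phi_eq by simp
      also have "\<dots> = 0" using ij by (simp add: mod_diff_left_eq[symmetric])
      finally have "y \<in> X0" unfolding X0_def y_def using ripow_lt[OF z] by simp
      moreover have "(r ^^ j) y = z" unfolding y_def using funpow_inv_cancel(2)[OF br] by simp
      ultimately show "z \<in> g ` (X0 \<times> {..<e})" using jl by force
    qed
  qed
qed

definition m :: nat where "m = card X0"

lemma n_eq: "n = m * e"
proof -
  have "card {..<n} = card (X0 \<times> {..<e})" using bij_betw_same_card[OF g_bij] by simp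
  then show ?thesis unfolding m_def by (simp add: card_cartesian_product)
qed

lemma m_pos: "m > 0" using n_eq c0 by (cases m) auto

definition beta :: "nat \<Rightarrow> nat" where "beta = (SOME h. bij_betw h {..<m} X0)"

lemma beta_bij: "bij_betw beta {..<m} X0"
proof -
  have "\<exists>h. bij_betw h {..<m} X0" using ex_bij_betw_nat_finite[OF X0_fin] unfolding m_def
    by (simp add: atLeast0LessThan)
  then show ?thesis unfolding beta_def by (rule someI_ex)
qed

lemma beta_in: "x < m \<Longrightarrow> beta x \<in> X0" using beta_bij bij_betwE by blast

lemma X0_r: "y \<in> X0 \<Longrightarrow> (r ^^ e) y \<in> X0"
proof -
  assume y: "y \<in> X0"
  have "y < n" using y X0_def by simp
  then obtain A B where w: "wp r u c0 y A B" using ex_wp by blast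
  have A0: "A mod int e = 0" using phi_eq[OF w] y X0_def by simp
  have "wp r u c0 ((r ^^ e) y) (A + int e) (B + 0)" by (rule wp_trans[OF wp_rpow w])
  then have "phi ((r ^^ e) y) = (A + int e) mod int e" using phi_eq by simp
  also have "\<dots> = 0" using A0 by simp
  finally show ?thesis using rpow_lt y X0_def by simp
qed

lemma X0_u: "y \<in> X0 \<Longrightarrow> u y \<in> X0"
proof -
  assume y: "y \<in> X0"
  have "y < n" using y X0_def by simp
  then obtain A B where w: "wp r u c0 y A B" using ex_wp by blast
  have "wp r u c0 (u y) A (B + 1)" using wp_u[OF w] .
  then have "phi (u y) = phi y" using phi_eq[OF w] phi_eq by simp
  then show ?thesis using u_lt y X0_def by simp
qed

definition r' :: "nat \<Rightarrow> nat" where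
  "r' x = (if x < m then inv_into {..<m} beta ((r ^^ e) (beta x)) else x)"
definition u' :: "nat \<Rightarrow> nat" where
  "u' x = (if x < m then inv_into {..<m} beta (u (beta x)) else x)"

lemma X0_img: "beta ` {..<m} = X0" using beta_bij bij_betw_imp_surj_on by blast
lemma beta_inj: "inj_on beta {..<m}" using beta_bij bij_betw_imp_inj_on by blast

lemma r'_prop: "x < m \<Longrightarrow> r' x < m \<and> beta (r' x) = (r ^^ e) (beta x)"
proof -
  assume x: "x < m"
  have h: "(r ^^ e) (beta x) \<in> beta ` {..<m}" using X0_r beta_in x X0_img by simp
  show ?thesis unfolding r'_def using x inv_into_into[OF h] f_inv_into_f[OF h] by simp
qed

lemma u'_prop: "x < m \<Longrightarrow> u' x < m \<and> beta (u' x) = u (beta x)"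
proof -
  assume x: "x < m"
  have h: "u (beta x) \<in> beta ` {..<m}" using X0_u beta_in x X0_img by simp
  show ?thesis unfolding u'_def using x inv_into_into[OF h] f_inv_into_f[OF h] by simp
qed

lemma r'_perm: "r' permutes {..<m}"
proof (rule endo_permutes')
  show "inj_on r' {..<m}"
  proof (rule inj_onI)
    fix a b assume a: "a \<in> {..<m}" "b \<in> {..<m}" "r' a = r' b"
    then have "(r ^^ e) (beta a) = (r ^^ e) (beta b)" using r'_prop by (metis lessThan_iff)
    then have "beta a = beta b" using bij_funpow[OF br, of e] by (simp add: bij_is_inj inj_eq)
    then show "a = b" using beta_inj a by (meson inj_onD)
  qed
  show "\<And>k. k < m \<Longrightarrow> r' k < m" using r'_prop by blast
  show "\<And>k. \<not> k < m \<Longrightarrow> r' k = k" unfolding r'_def by simp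
qed

lemma u'_perm: "u' permutes {..<m}"
proof (rule endo_permutes')
  show "inj_on u' {..<m}"
  proof (rule inj_onI)
    fix a b assume a: "a \<in> {..<m}" "b \<in> {..<m}" "u' a = u' b"
    then have "u (beta a) = u (beta b)" using u'_prop by (metis lessThan_iff)
    then have "beta a = beta b" using bu by (simp add: bij_is_inj inj_eq)
    then show "a = b" using beta_inj a by (meson inj_onD)
  qed
  show "\<And>k. k < m \<Longrightarrow> u' k < m" using u'_prop by blast
  show "\<And>k. \<not> k < m \<Longrightarrow> u' k = k" unfolding u'_def by simp
qed

lemma sc: "sctx m e r' u'"
  using m_pos e r'_perm u'_perm by unfold_locales

lemma comm_fix:
  assumes z: "z < n" and p: "phi (r (u z)) \<noteq> 0"
  shows "r (u z) = u (r z)"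
proof -
  have c: "comm r u (r (u z)) = u (r z)" by (rule comm_char[OF br bu])
  have "r (u z) < n" using z u_lt r_lt by blast
  then have "comm r u (r (u z)) = r (u z)" using cone_phi p by blast
  then show ?thesis using c by simp
qed

lemma commute_pow:
  assumes y: "y \<in> X0"
  shows "i < e \<Longrightarrow> (r ^^ i) (u y) = u ((r ^^ i) y)"
proof (induction i)
  case 0 then show ?case by simp
next
  case (Suc i)
  have "y < n" using y X0_def by simp
  then obtain A B where w: "wp r u c0 y A B" using ex_wp by blast
  have A0: "A mod int e = 0" using phi_eq[OF w] y X0_def by simp
  let ?z = "(r ^^ i) y"
  have "wp r u c0 ?z (A + int i) (B + 0)" by (rule wp_trans[OF wp_rpow w])
  then have "wp r u c0 (r (u ?z)) (A + int i + 1) (B + 0 + 1)" by (intro wp_r wp_u)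
  then have "phi (r (u ?z)) = (A + int i + 1) mod int e" using phi_eq by simp
  also have "\<dots> = (A mod int e + (int i + 1)) mod int e" by (simp add: mod_add_left_eq add.assoc)
  also have "\<dots> = int i + 1" using A0 Suc.prems by simp
  finally have "phi (r (u ?z)) \<noteq> 0" by simp
  then have "r (u ?z) = u (r ?z)" using comm_fix rpow_lt y X0_def by simp
  moreover have "(r ^^ i) (u y) = u ?z" using Suc by simp
  ultimately show ?case by simp
qed

lemma decn:
  assumes "k < n"
  obtains x i where "k = x + m * i" "x < m" "i < e"
proof -
  have "k < m * e" using assms n_eq by simp
  then show ?thesis using that by (rule decE)
qed

definition sig :: "nat \<Rightarrow> nat" where
  "sig k = (if k < n then (r ^^ (k div m)) (beta (k mod m)) else k)"

lemma sig_enc: "x < m \<Longrightarrow> i < e \<Longrightarrow> sig (x + m * i) = (r ^^ i) (beta x)"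
  unfolding sig_def using enc_lt[of x m i e] n_eq by simp

lemma sig_perm: "sig permutes {..<n}"
proof (rule endo_permutes')
  show "inj_on sig {..<n}"
  proof (rule inj_onI)
    fix k1 k2 assume k: "k1 \<in> {..<n}" "k2 \<in> {..<n}" "sig k1 = sig k2"
    obtain x1 i1 where a: "k1 = x1 + m * i1" "x1 < m" "i1 < e" using k(1) by (auto elim: decn)
    obtain x2 i2 where b: "k2 = x2 + m * i2" "x2 < m" "i2 < e" using k(2) by (auto elim: decn)
    have "g (beta x1, i1) = g (beta x2, i2)" using k(3) a b sig_enc by simp
    moreover have "(beta x1, i1) \<in> X0 \<times> {..<e}" "(beta x2, i2) \<in> X0 \<times> {..<e}" using a b beta_in by auto
    ultimately have "(beta x1, i1) = (beta x2, i2)" using g_bij bij_betw_imp_inj_on by (metis (no_types, lifting) inj_onD)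
    then have "x1 = x2" "i1 = i2" using beta_inj a b by (auto dest: inj_onD)
    then show "k1 = k2" using a b by simp
  qed
  show "k < n \<Longrightarrow> sig k < n" for k
  proof -
    assume k: "k < n"
    then obtain x i where a: "k = x + m * i" "x < m" "i < e" by (rule decn)
    then show ?thesis using sig_enc rpow_lt beta_in X0_def by auto
  qed
  show "\<not> k < n \<Longrightarrow> sig k = k" for k unfolding sig_def by simp
qed

lemma conj_main: "conj_by sig n (stretch m e (r',u')) (r,u)"
proof -
  interpret T: sctx m e r' u' by (rule sc)
  have "sig (T.R k) = r (sig k) \<and> sig (T.U k) = u (sig k)" for k
  proof (cases "k < n")
    case False
    then have "T.R k = k" "T.U k = k" using T.R_out T.U_out n_eq by auto
    moreover have "r k = k" "u k = k" using False rp up by (auto simp: permutes_def)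
    ultimately show ?thesis using False unfolding sig_def by simp
  next
    case True
    then obtain x i where a: "k = x + m * i" "x < m" "i < e" by (rule decn)
    have 1: "sig (T.R k) = r (sig k)"
    proof (cases "i + 1 < e")
      case True
      then have "T.R k = x + m * (i + 1)" using T.R_enc a by simp
      then have "sig (T.R k) = (r ^^ (i + 1)) (beta x)" using sig_enc[OF a(2) True] by simp
      then show ?thesis using sig_enc[OF a(2,3)] a by simp
    next
      case False
      then have ie: "i = e - 1" using a by simp
      have "T.R k = r' x + m * 0" using T.R_enc a False by simp
      then have "sig (T.R k) = beta (r' x)" using sig_enc[OF conjunct1[OF r'_prop[OF a(2)]], of 0] e by simp
      also have "\<dots> = (r ^^ e) (beta x)" using r'_prop[OF a(2)] by simp
      also have "\<dots> = r ((r ^^ (e - 1)) (beta x))"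
      proof -
        obtain e' where "e = Suc e'" using e by (cases e) auto
        then show ?thesis by simp
      qed
      also have "\<dots> = r (sig k)" using sig_enc[OF a(2,3)] a ie by simp
      finally show ?thesis .
    qed
    have "T.U k = u' x + m * i" using T.U_enc a by simp
    then have "sig (T.U k) = (r ^^ i) (beta (u' x))" using sig_enc[OF conjunct1[OF u'_prop[OF a(2)]] a(3)] by simp
    also have "\<dots> = (r ^^ i) (u (beta x))" using u'_prop[OF a(2)] by simp
    also have "\<dots> = u ((r ^^ i) (beta x))" using commute_pow[OF beta_in[OF a(2)] a(3)] .
    also have "\<dots> = u (sig k)" using sig_enc[OF a(2,3)] a by simp
    finally show ?thesis using 1 by simp
  qed
  then show ?thesis unfolding conj_by_def stretch_def using sig_perm by simp
qed

end

lemma stretch_surj: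
  assumes "(r,u) \<in> sts n" "inH2 n (r,u)" "e > 0" "\<And>A B. (A,B) \<in> periods n (r,u) \<Longrightarrow> int e dvd A"
  shows "\<exists>m r' u' s. n = m * e \<and> sctx m e r' u' \<and> conj_by s n (stretch m e (r',u')) (r,u)"
proof -
  obtain c0 where c0: "c0 < n" "comm r u c0 \<noteq> c0" using cone_exists[OF assms(2)] by blast
  interpret sctx2 n e r u c0 using assms c0 by unfold_locales
  show ?thesis using n_eq sc conj_main by blast
qed


lemma stretch_QA:
  assumes "m > 0" "e > 0" "p \<in> QA m L"
  shows "stretch m e p \<in> QA (m * e) (scaleL e L)"
proof -
  obtain r u where p: "p = (r,u)" by (cases p)
  have s: "(r,u) \<in> sts m" "inH2 m (r,u)" "periods m (r,u) = L" using assms(3) p QA_def by auto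
  interpret A: sctx m e r u using assms(1,2) sts_perm[OF s(1)] by unfold_locales
  show ?thesis unfolding p stretch_def QA_def
    using A.reach_stretch[OF s(1)] A.inH2_stretch s A.periods_stretch[OF s(1)] by simp
qed

lemma Q_stretch:
  assumes m: "m > 0" and e: "e > 0"
  shows "card (Q m L) = card (Q (m * e) (scaleL e L))"
proof (rule Q_card_eq[where F = "stretch m e"])
  show "\<And>p. p \<in> QA m L \<Longrightarrow> stretch m e p \<in> QA (m * e) (scaleL e L)" using stretch_QA m e by blast
  show "(stretch m e p1, stretch m e p2) \<in> sts_iso (m * e)"
    if a: "p1 \<in> QA m L" "p2 \<in> QA m L" "(p1,p2) \<in> sts_iso m" for p1 p2
  proof -
    obtain r1 u1 r2 u2 where p: "p1 = (r1,u1)" "p2 = (r2,u2)" by (cases p1, cases p2)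
    have s: "(r1,u1) \<in> sts m" "(r2,u2) \<in> sts m" using a p QA_def by auto
    have c1: "sctx m e r1 u1" using m e sts_perm[OF s(1)] by unfold_locales
    have c2: "sctx m e r2 u2" using m e sts_perm[OF s(2)] by unfold_locales
    obtain s where "conj_by s m (r1,u1) (r2,u2)" using a(3) p sts_iso_iff by auto
    from conj_stretch[OF c1 c2 this] show ?thesis
      using stretch_QA[OF m e a(1)] stretch_QA[OF m e a(2)] p unfolding sts_iso_iff QA_def by blast
  qed
  show "(p1,p2) \<in> sts_iso m"
    if a: "p1 \<in> QA m L" "p2 \<in> QA m L" "(stretch m e p1, stretch m e p2) \<in> sts_iso (m * e)" for p1 p2
  proof -
    obtain r1 u1 r2 u2 where p: "p1 = (r1,u1)" "p2 = (r2,u2)" by (cases p1, cases p2)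
    have s: "(r1,u1) \<in> sts m" "(r2,u2) \<in> sts m" "inH2 m (r1,u1)" using a p QA_def by auto
    have c1: "sctx m e r1 u1" using m e sts_perm[OF s(1)] by unfold_locales
    have c2: "sctx m e r2 u2" using m e sts_perm[OF s(2)] by unfold_locales
    obtain t where "conj_by t (m * e) (stretch m e (r1,u1)) (stretch m e (r2,u2))"
      using a(3) p sts_iso_iff by auto
    from conj_stretch_refl[OF c1 c2 s(1,3) this] show ?thesis using s p sts_iso_iff by blast
  qed
  fix q assume q: "q \<in> QA (m * e) (scaleL e L)"
  obtain r u where qq: "q = (r,u)" by (cases q)
  have qs: "(r,u) \<in> sts (m * e)" "inH2 (m * e) (r,u)" "periods (m * e) (r,u) = scaleL e L"
    using q qq QA_def by auto
  have dv: "\<And>A B. (A,B) \<in> periods (m * e) (r,u) \<Longrightarrow> int e dvd A" using qs(3) scaleL_def by auto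
  have "\<exists>m2 r' u' s. m * e = m2 * e \<and> sctx m2 e r' u' \<and> conj_by s (m * e) (stretch m2 e (r',u')) (r,u)"
    by (rule stretch_surj[OF qs(1,2) e]) (rule dv)
  then obtain m2 r' u' s where h: "m * e = m2 * e" "sctx m2 e r' u'" "conj_by s (m * e) (stretch m2 e (r',u')) (r,u)"
    by blast
  have "m2 = m" using h(1) e by simp
  then have h2: "sctx m e r' u'" "conj_by s (m * e) (stretch m e (r',u')) (r,u)" using h by auto
  interpret T: sctx m e r' u' by (rule h2(1))
  have c: "conj_by s (m * e) (T.R, T.U) (r,u)" using h2(2) unfolding stretch_def by simp
  have Hs: "(T.R, T.U) \<in> sts (m * e)"
    by (rule conj_sts[OF conj_by_inv[OF c] qs(1) T.R_perm T.U_perm])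
  have iso: "((T.R, T.U), (r,u)) \<in> sts_iso (m * e)" using Hs qs(1) c sts_iso_iff by blast
  have s': "(r',u') \<in> sts m" by (rule T.sts_proj[OF Hs])
  have "inH2 m (r',u')" using iso_inH2[OF iso] qs(2) T.inH2_stretch by simp
  moreover have "periods m (r',u') = L"
  proof -
    have "scaleL e (periods m (r',u')) = periods (m * e) (T.R, T.U)" using T.periods_stretch[OF s'] by simp
    also have "\<dots> = scaleL e L" using iso_periods[OF iso] qs(3) by simp
    finally show ?thesis using scaleL_inj e by blast
  qed
  ultimately have "(r',u') \<in> QA m L" using s' QA_def by simp
  moreover have "(stretch m e (r',u'), q) \<in> sts_iso (m * e)" using iso qq unfolding stretch_def by simp
  ultimately show "\<exists>p\<in>QA m L. (stretch m e p, q) \<in> sts_iso (m * e)" by blast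
qed

lemma stretch_dvd:
  assumes "(r,u) \<in> sts n" "inH2 n (r,u)" "e > 0" "\<And>A B. (A,B) \<in> periods n (r,u) \<Longrightarrow> int e dvd A"
  shows "e dvd n"
proof -
  have "\<exists>m r' u' s. n = m * e \<and> sctx m e r' u' \<and> conj_by s n (stretch m e (r',u')) (r,u)"
    by (rule stretch_surj[OF assms(1,2,3)]) (rule assms(4))
  then show ?thesis by auto
qed


definition hnfL :: "nat \<Rightarrow> nat \<Rightarrow> nat \<Rightarrow> (int \<times> int) set" where
  "hnfL a b c = {(x,y). int c dvd y \<and> int a dvd x - int b * (y div int c)}"

lemma sl_mult_nat:
  assumes "sublattice L" "(x,y) \<in> L"
  shows "(int k * x, int k * y) \<in> L"
proof (induction k)
  case 0 then show ?case using assms(1) sublattice_def by simp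
next
  case (Suc k)
  then have "(fst (int k * x, int k * y) + fst (x,y), snd (int k * x, int k * y) + snd (x,y)) \<in> L"
    using assms sublattice_def by blast
  then show ?case by (simp add: algebra_simps)
qed

lemma sl_mult:
  assumes "sublattice L" "(x,y) \<in> L"
  shows "(k * x, k * y) \<in> L"
proof (cases "k \<ge> 0")
  case True
  then show ?thesis using sl_mult_nat[OF assms, of "nat k"] by simp
next
  case False
  have "(int (nat (-k)) * x, int (nat (-k)) * y) \<in> L" using sl_mult_nat[OF assms] by blast
  then have "(- (int (nat (-k)) * x), - (int (nat (-k)) * y)) \<in> L" using assms(1) sublattice_def by fastforce
  then show ?thesis using False by simp
qed

lemma sl_add: "sublattice L \<Longrightarrow> (x,y) \<in> L \<Longrightarrow> (x',y') \<in> L \<Longrightarrow> (x + x', y + y') \<in> L"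
  unfolding sublattice_def by fastforce

lemma sl_neg: "sublattice L \<Longrightarrow> (x,y) \<in> L \<Longrightarrow> (- x, - y) \<in> L"
  unfolding sublattice_def by fastforce

lemma sl_diff: "sublattice L \<Longrightarrow> (x,y) \<in> L \<Longrightarrow> (x',y') \<in> L \<Longrightarrow> (x - x', y - y') \<in> L"
  using sl_add[of L x y "- x'" "- y'"] sl_neg[of L x' y'] by simp

lemma sl_comb: "sublattice L \<Longrightarrow> (x,y) \<in> L \<Longrightarrow> (x',y') \<in> L \<Longrightarrow> (k * x + k' * x', k * y + k' * y') \<in> L"
  using sl_add sl_mult by blast

lemma hnf_exists:
  assumes L: "sublattice L" and k1: "(k1, 0) \<in> L" "k1 > 0" and k2: "(0, k2) \<in> L" "k2 > 0"
  shows "\<exists>a b c. a > 0 \<and> c > 0 \<and> b < a \<and> L = hnfL a b c"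
proof -
  define c where "c = (LEAST c::nat. c > 0 \<and> (\<exists>x. (x, int c) \<in> L))"
  have ex_c: "nat k2 > 0 \<and> (\<exists>x. (x, int (nat k2)) \<in> L)" using k2 by auto
  have c: "c > 0" "\<exists>x. (x, int c) \<in> L" using LeastI_ex[of "\<lambda>c::nat. c > 0 \<and> (\<exists>x. (x, int c) \<in> L)"] ex_c
    unfolding c_def by blast+
  have cmin: "\<And>c'. c' > 0 \<Longrightarrow> (x, int c') \<in> L \<Longrightarrow> c \<le> c'" for x
    unfolding c_def by (rule Least_le) blast
  define a where "a = (LEAST a::nat. a > 0 \<and> (int a, 0) \<in> L)"
  have ex_a: "nat k1 > 0 \<and> (int (nat k1), 0) \<in> L" using k1 by auto
  have a: "a > 0" "(int a, 0) \<in> L" using LeastI_ex[of "\<lambda>a::nat. a > 0 \<and> (int a, 0) \<in> L"] ex_a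
    unfolding a_def by blast+
  have amin: "\<And>a'. a' > 0 \<Longrightarrow> (int a', 0) \<in> L \<Longrightarrow> a \<le> a'"
    unfolding a_def by (rule Least_le) blast
  obtain x0 where x0: "(x0, int c) \<in> L" using c by blast
  define b where "b = nat (x0 mod int a)"
  have bi: "int b = x0 mod int a" unfolding b_def using a by simp
  have ba: "b < a" unfolding b_def using a by (simp add: nat_less_iff)
  have bc: "(int b, int c) \<in> L"
  proof -
    have "(1 * x0 + (- (x0 div int a)) * int a, 1 * int c + (- (x0 div int a)) * 0) \<in> L"
      by (rule sl_comb[OF L x0 a(2)])
    moreover have "1 * x0 + (- (x0 div int a)) * int a = int b" using bi by (simp add: minus_div_mult_eq_mod)
    ultimately show ?thesis by simp
  qed
  have cdvd: "int c dvd y" if "(x,y) \<in> L" for x y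
  proof -
    let ?q = "y div int c"
    have "(1 * x + (- ?q) * int b, 1 * y + (- ?q) * int c) \<in> L" by (rule sl_comb[OF L that bc])
    moreover have "1 * y + (- ?q) * int c = y mod int c" by (simp add: minus_div_mult_eq_mod)
    ultimately have h: "(x - ?q * int b, y mod int c) \<in> L" by simp
    show ?thesis
    proof (rule ccontr)
      assume "\<not> int c dvd y"
      then have "y mod int c > 0" using c by (simp add: dvd_eq_mod_eq_0 order_neq_le_trans)
      moreover have "y mod int c < int c" using c by simp
      ultimately show False using cmin[of "nat (y mod int c)" "x - ?q * int b"] h by simp
    qed
  qed
  have advd: "int a dvd x" if "(x,0) \<in> L" for x
  proof -
    let ?q = "x div int a"
    have "(1 * x + (- ?q) * int a, 1 * 0 + (- ?q) * 0) \<in> L" by (rule sl_comb[OF L that a(2)])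
    moreover have "1 * x + (- ?q) * int a = x mod int a" by (simp add: minus_div_mult_eq_mod)
    ultimately have h: "(x mod int a, 0) \<in> L" by simp
    show ?thesis
    proof (rule ccontr)
      assume "\<not> int a dvd x"
      then have "x mod int a > 0" using a by (simp add: dvd_eq_mod_eq_0 order_neq_le_trans)
      moreover have "x mod int a < int a" using a by simp
      ultimately show False using amin[of "nat (x mod int a)"] h by simp
    qed
  qed
  have "L = hnfL a b c"
  proof (rule set_eqI, clarify)
    fix x y
    show "(x,y) \<in> L \<longleftrightarrow> (x,y) \<in> hnfL a b c"
    proof
      assume xy: "(x,y) \<in> L"
      have cy: "int c dvd y" using cdvd[OF xy] .
      let ?t = "y div int c"
      have "(1 * x + (- ?t) * int b, 1 * y + (- ?t) * int c) \<in> L" by (rule sl_comb[OF L xy bc])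
      moreover have "1 * y + (- ?t) * int c = 0" using cy by simp
      ultimately have "(x - int b * ?t, 0) \<in> L" by (simp add: algebra_simps)
      then show "(x,y) \<in> hnfL a b c" unfolding hnfL_def using cy advd by simp
    next
      assume "(x,y) \<in> hnfL a b c"
      then have h: "int c dvd y" "int a dvd x - int b * (y div int c)" unfolding hnfL_def by auto
      then obtain s where s: "x - int b * (y div int c) = int a * s" by (auto elim: dvdE)
      have "(s * int a + (y div int c) * int b, s * 0 + (y div int c) * int c) \<in> L" by (rule sl_comb[OF L a(2) bc])
      moreover have "s * int a + (y div int c) * int b = x" using s by (simp add: algebra_simps)
      moreover have "s * 0 + (y div int c) * int c = y" using h(1) by simp
      ultimately show "(x,y) \<in> L" by simp
    qed
  qed
  then show ?thesis using a c ba by blast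
qed

lemma hnf_sublattice: "sublattice (hnfL a b c)"
proof -
  have 1: "(x + x', y + y') \<in> hnfL a b c" if "(x,y) \<in> hnfL a b c" "(x',y') \<in> hnfL a b c" for x y x' y'
  proof -
    have h: "int c dvd y" "int a dvd x - int b * (y div int c)" "int c dvd y'" "int a dvd x' - int b * (y' div int c)"
      using that unfolding hnfL_def by auto
    have "(y + y') div int c = y div int c + y' div int c" using h(1,3) by simp
    then have eq: "x + x' - int b * ((y + y') div int c) = (x - int b * (y div int c)) + (x' - int b * (y' div int c))"
      by (simp add: algebra_simps)
    have "int a dvd x + x' - int b * ((y + y') div int c)" unfolding eq by (rule dvd_add[OF h(2) h(4)])
    moreover have "int c dvd y + y'" by (rule dvd_add[OF h(1) h(3)])
    ultimately show ?thesis unfolding hnfL_def by simp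
  qed
  have 2: "(- x, - y) \<in> hnfL a b c" if "(x,y) \<in> hnfL a b c" for x y
  proof -
    have h: "int c dvd y" "int a dvd x - int b * (y div int c)" using that unfolding hnfL_def by auto
    have "(- y) div int c = - (y div int c)" using h(1) by (simp add: div_minus_right dvd_neg_div)
    then have eq: "- x - int b * ((- y) div int c) = - (x - int b * (y div int c))" by (simp add: algebra_simps)
    have "int a dvd - x - int b * ((- y) div int c)" unfolding eq using h(2) by (simp only: dvd_minus_iff)
    moreover have "int c dvd - y" using h(1) by simp
    ultimately show ?thesis unfolding hnfL_def by simp
  qed
  show ?thesis unfolding sublattice_def using 1 2 by (auto simp: hnfL_def)
qed

lemma coset_eq:
  assumes "sublattice L"
  shows "coset p L = coset q L \<longleftrightarrow> (fst p - fst q, snd p - snd q) \<in> L"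
proof
  assume e: "coset p L = coset q L"
  have "p \<in> coset p L" unfolding coset_def using assms sublattice_def by force
  then have "p \<in> coset q L" using e by simp
  then obtain l where "l \<in> L" "p = (fst q + fst l, snd q + snd l)" unfolding coset_def by auto
  then show "(fst p - fst q, snd p - snd q) \<in> L" by simp
next
  assume d: "(fst p - fst q, snd p - snd q) \<in> L"
  have sub: "coset p L \<subseteq> coset q L" if "(fst p - fst q, snd p - snd q) \<in> L" for p q
  proof
    fix z assume "z \<in> coset p L"
    then obtain l where l: "l \<in> L" "z = (fst p + fst l, snd p + snd l)" unfolding coset_def by auto
    have "(fst p - fst q + fst l, snd p - snd q + snd l) \<in> L" using sl_add[OF assms that, of "fst l" "snd l"] l by simp
    then show "z \<in> coset q L" unfolding coset_def using l
      by (intro CollectI exI[of _ "(fst p - fst q + fst l, snd p - snd q + snd l)"]) simp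
  qed
  have "(fst q - fst p, snd q - snd p) \<in> L" using sl_neg[OF assms d] by simp
  then show "coset p L = coset q L" using sub d by blast
qed

lemma dvd_small:
  fixes k p q :: int
  assumes "k > 0" "0 \<le> p" "p < k" "0 \<le> q" "q < k" "k dvd p - q"
  shows "p = q"
proof -
  obtain t where t: "p - q = k * t" using assms(6) by (auto elim: dvdE)
  have "t = 0"
  proof (rule ccontr)
    assume "t \<noteq> 0"
    then have "1 \<le> \<bar>t\<bar>" by simp
    then have "k * 1 \<le> k * \<bar>t\<bar>" using assms(1) by (intro mult_left_mono) auto
    moreover have "\<bar>k * t\<bar> = k * \<bar>t\<bar>" using assms(1) by (simp add: abs_mult)
    ultimately have "k \<le> \<bar>p - q\<bar>" using t by simp
    then show False using assms(2-5) by linarith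
  qed
  then show ?thesis using t by simp
qed

lemma hnf_card:
  assumes "a > 0" "c > 0"
  shows "card (range (\<lambda>x. coset x (hnfL a b c))) = a * c"
proof -
  let ?L = "hnfL a b c"
  have sl: "sublattice ?L" by (rule hnf_sublattice)
  let ?B = "{0..<int a} \<times> {0..<int c}"
  have img: "range (\<lambda>x. coset x ?L) = (\<lambda>x. coset x ?L) ` ?B"
  proof
    show "(\<lambda>x. coset x ?L) ` ?B \<subseteq> range (\<lambda>x. coset x ?L)" by auto
    show "range (\<lambda>x. coset x ?L) \<subseteq> (\<lambda>x. coset x ?L) ` ?B"
    proof
      fix C assume "C \<in> range (\<lambda>x. coset x ?L)"
      then obtain x y where C: "C = coset (x,y) ?L" by auto
      define q where "q = y mod int c"
      define t where "t = y div int c"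
      define p where "p = (x - int b * t) mod int a"
      have "(x - p, y - q) \<in> ?L"
      proof -
        have "y - q = int c * t" unfolding q_def t_def by (simp add: minus_mod_eq_mult_div)
        then have "(y - q) div int c = t" using assms by simp
        moreover have "int a dvd (x - int b * t) - p" unfolding p_def by (simp add: mod_0_imp_dvd minus_mod_eq_mult_div[symmetric])
        ultimately show ?thesis unfolding hnfL_def using \<open>y - q = int c * t\<close> by (simp add: algebra_simps)
      qed
      then have "coset (x,y) ?L = coset (p,q) ?L" using coset_eq[OF sl] by simp
      moreover have "(p,q) \<in> ?B" unfolding p_def q_def using assms by simp
      ultimately show "C \<in> (\<lambda>x. coset x ?L) ` ?B" using C by blast
    qed
  qed
  have inj: "inj_on (\<lambda>x. coset x ?L) ?B"
  proof (rule inj_onI)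
    fix u v assume uv: "u \<in> ?B" "v \<in> ?B" "coset u ?L = coset v ?L"
    obtain p q p' q' where pq: "u = (p,q)" "v = (p',q')" by (cases u, cases v)
    have h: "(p - p', q - q') \<in> ?L" using coset_eq[OF sl] uv pq by simp
    have b: "0 \<le> p" "p < int a" "0 \<le> q" "q < int c" "0 \<le> p'" "p' < int a" "0 \<le> q'" "q' < int c"
      using uv pq by auto
    have "int c dvd q - q'" using h hnfL_def by simp
    then have "q = q'" using b dvd_small[of "int c" q q'] assms by simp
    then have "int a dvd p - p'" using h hnfL_def by simp
    then have "p = p'" using b dvd_small[of "int a" p p'] assms by simp
    then show "u = v" using pq \<open>q = q'\<close> by simp
  qed
  have "card (range (\<lambda>x. coset x ?L)) = card ?B" using img card_image[OF inj] by simp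
  also have "\<dots> = a * c" by (simp add: card_cartesian_product)
  finally show ?thesis .
qed


lemma sts_finite: "finite (sts n)"
proof -
  have "sts n \<subseteq> {f. f permutes {..<n}} \<times> {f. f permutes {..<n}}" unfolding sts_def by auto
  moreover have "finite ({f. f permutes {..<n}} \<times> {f. f permutes {..<(n::nat)}})"
    using finite_permutations[of "{..<n}"] by simp
  ultimately show ?thesis by (rule finite_subset)
qed

lemma quot_finite: "finite A \<Longrightarrow> finite (A // r)"
  unfolding quotient_def by simp

lemma Q_finite: "finite (Q n L)"
  unfolding Q_def QA_def by (rule quot_finite) (rule finite_subset[OF _ sts_finite], auto)

lemma E_finite: "finite (E n)"
  unfolding E_def by (rule quot_finite) (rule finite_subset[OF _ sts_finite], auto)

lemma Ep_Q: "Ep m = Q m UNIV"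
  unfolding Ep_def Q_def QA_def primitive_def by simp

lemma per_sublattice:
  assumes "(r,u) \<in> sts n" "inH2 n (r,u)"
  shows "sublattice (periods n (r,u))"
proof -
  obtain c0 where c0: "c0 < n" "comm r u c0 \<noteq> c0" using cone_exists[OF assms(2)] by blast
  have P: "periods n (r,u) = {(a,b). wp r u c0 c0 a b}" by (rule per_loops[OF assms c0])
  have b: "bij r" "bij u" using sts_bij[OF assms(1)] by auto
  show ?thesis unfolding sublattice_def P
  proof (intro conjI ballI)
    show "(0,0) \<in> {(a,b). wp r u c0 c0 a b}" by (simp add: wp_refl)
    fix x y assume "x \<in> {(a,b). wp r u c0 c0 a b}" "y \<in> {(a,b). wp r u c0 c0 a b}"
    then show "(fst x + fst y, snd x + snd y) \<in> {(a,b). wp r u c0 c0 a b}"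
      using wp_trans by (cases x, cases y) fastforce
  next
    fix x assume "x \<in> {(a,b). wp r u c0 c0 a b}"
    then show "(- fst x, - snd x) \<in> {(a,b). wp r u c0 c0 a b}"
      using wp_rev[OF b] by (cases x) fastforce
  qed
qed

lemma per_axes:
  assumes "(r,u) \<in> sts n" "inH2 n (r,u)"
  shows "\<exists>k>0. (k,0) \<in> periods n (r,u)" "\<exists>k>0. (0,k) \<in> periods n (r,u)"
proof -
  obtain c0 where c0: "c0 < n" "comm r u c0 \<noteq> c0" using cone_exists[OF assms(2)] by blast
  have P: "periods n (r,u) = {(a,b). wp r u c0 c0 a b}" by (rule per_loops[OF assms c0])
  have "permutation r" by (rule permutes_imp_permutation[OF _ sts_perm(1)[OF assms(1)]]) simp
  then obtain N where N: "r ^^ N = id" "N > 0" by (rule permutation_is_nilpotent)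
  have "wp r u c0 ((r ^^ N) c0) (int N) 0" by (rule wp_rpow)
  then have "(int N, 0) \<in> periods n (r,u)" using P N by simp
  then show "\<exists>k>0. (k,0) \<in> periods n (r,u)" using N by (intro exI[of _ "int N"]) simp
  have "permutation u" by (rule permutes_imp_permutation[OF _ sts_perm(2)[OF assms(1)]]) simp
  then obtain M where M: "u ^^ M = id" "M > 0" by (rule permutation_is_nilpotent)
  have "wp r u c0 ((u ^^ M) c0) 0 (int M)" by (rule wp_upow)
  then have "(0, int M) \<in> periods n (r,u)" using P M by simp
  then show "\<exists>k>0. (0,k) \<in> periods n (r,u)" using M by (intro exI[of _ "int M"]) simp
qed

lemma hnf_in_Lambda: "a > 0 \<Longrightarrow> c > 0 \<Longrightarrow> hnfL a b c \<in> Lambda (a * c)"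
  unfolding Lambda_def using hnf_sublattice hnf_card by simp

lemma noninj_nat:
  assumes "finite (range (h :: nat \<Rightarrow> 'b))"
  obtains i j where "i \<noteq> j" "h i = h j"
proof -
  have "\<not> inj h" using assms finite_imageD[of h UNIV] by auto
  then show ?thesis using that unfolding inj_def by blast
qed

lemma Lambda_hnf:
  assumes "d > 0" "L \<in> Lambda d"
  shows "\<exists>a b c. a > 0 \<and> c > 0 \<and> b < a \<and> L = hnfL a b c \<and> a * c = d"
proof -
  have sl: "sublattice L" and cd: "card (range (\<lambda>x. coset x L)) = d" using assms Lambda_def by auto
  have fin: "finite (range (\<lambda>x. coset x L))" using cd assms(1) card_ge_0_finite by auto
  have f1: "finite (range (\<lambda>j::nat. coset (int j, 0) L))"
    by (rule finite_subset[OF _ fin]) auto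
  obtain i j where ij: "i \<noteq> j" "coset (int i, 0) L = coset (int j, 0) L" using noninj_nat[OF f1] by blast
  have h0: "(int i - int j, 0) \<in> L" using coset_eq[OF sl] ij by simp
  have h1: "(- (int i - int j), - 0) \<in> L" by (rule sl_neg[OF sl h0])
  have "(\<bar>int i - int j\<bar>, 0) \<in> L" using h0 h1 by (cases "int i - int j \<ge> 0") simp_all
  moreover have "\<bar>int i - int j\<bar> > 0" using ij by simp
  ultimately have k1: "\<exists>k>0. (k,0) \<in> L" by blast
  have f2: "finite (range (\<lambda>j::nat. coset (0, int j) L))"
    by (rule finite_subset[OF _ fin]) auto
  obtain i' j' where ij': "i' \<noteq> j'" "coset (0, int i') L = coset (0, int j') L" using noninj_nat[OF f2] by blast
  have h0': "(0, int i' - int j') \<in> L" using coset_eq[OF sl] ij' by simp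
  have h1': "(- 0, - (int i' - int j')) \<in> L" by (rule sl_neg[OF sl h0'])
  have "(0, \<bar>int i' - int j'\<bar>) \<in> L" using h0' h1' by (cases "int i' - int j' \<ge> 0") simp_all
  moreover have "\<bar>int i' - int j'\<bar> > 0" using ij' by simp
  ultimately have k2: "\<exists>k>0. (0,k) \<in> L" by blast
  obtain a b c where h: "a > 0" "c > 0" "b < a" "L = hnfL a b c" using hnf_exists[OF sl] k1 k2 by blast
  have "a * c = d" using hnf_card[OF h(1,2), of b] h(4) cd by simp
  then show ?thesis using h by blast
qed

lemma Lambda_finite:
  assumes "d > 0"
  shows "finite (Lambda d)"
proof -
  have "Lambda d \<subseteq> (\<lambda>(a,b,c). hnfL a b c) ` ({..d} \<times> {..d} \<times> {..d})"
  proof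
    fix L assume "L \<in> Lambda d"
    then obtain a b c where h: "a > 0" "c > 0" "b < a" "L = hnfL a b c" "a * c = d"
      using Lambda_hnf[OF assms] by blast
    have "a \<le> a * c" "c \<le> a * c" using h(1,2) by simp_all
    then have "a \<le> d" "c \<le> d" using h(5) by simp_all
    then have "(a,b,c) \<in> {..d} \<times> {..d} \<times> {..d}" using h by simp
    then show "L \<in> (\<lambda>(a,b,c). hnfL a b c) ` ({..d} \<times> {..d} \<times> {..d})" using h by force
  qed
  then show ?thesis by (rule finite_subset) simp
qed

lemma Q_chain1:
  assumes a: "a > 0" and c: "c > 0" and cn: "c dvd n" and n: "n > 0"
  shows "card (Q n (hnfL a b c)) = card (Q (n div c) (scaleL a UNIV))"
proof -
  let ?L = "hnfL a b c"
  define L1 where "L1 = {(x,y). (int c * x, y) \<in> swapL ?L}"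
  have e1: "swapL ?L = scaleL c L1"
    unfolding L1_def swapL_def scaleL_def hnfL_def using c by auto
  have e2: "shL b (swapL L1) = scaleL a UNIV"
    unfolding L1_def swapL_def scaleL_def hnfL_def shL_def using c by auto
  have nc: "n div c > 0"
  proof -
    obtain k where k: "n = c * k" using cn by (auto elim: dvdE)
    then have "k > 0" using n by (cases k) auto
    then show ?thesis using k c by simp
  qed
  have nn: "n div c * c = n" using cn by simp
  have "card (Q n ?L) = card (Q n (swapL ?L))" by (rule Q_swap)
  also have "\<dots> = card (Q (n div c * c) (scaleL c L1))" using e1 nn by simp
  also have "\<dots> = card (Q (n div c) L1)" using Q_stretch[OF nc c] by simp
  also have "\<dots> = card (Q (n div c) (swapL L1))" by (rule Q_swap)
  also have "\<dots> = card (Q (n div c) (shL b (swapL L1)))" by (rule Q_shear)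
  also have "\<dots> = card (Q (n div c) (scaleL a UNIV))" using e2 by simp
  finally show ?thesis .
qed

lemma Q_chain2:
  assumes a: "a > 0" and an: "a dvd N" and N: "N > 0"
  shows "card (Q N (scaleL a UNIV)) = card (Q (N div a) UNIV)"
proof -
  have na: "N div a > 0"
  proof -
    obtain k where k: "N = a * k" using an by (auto elim: dvdE)
    then have "k > 0" using N by (cases k) auto
    then show ?thesis using k a by simp
  qed
  have "N div a * a = N" using an by simp
  then show ?thesis using Q_stretch[OF na a, of UNIV] by simp
qed

lemma QA_nonempty: "Q n L \<noteq> {} \<Longrightarrow> \<exists>p. p \<in> QA n L"
  unfolding Q_def by (auto simp: quotient_def)

lemma QA_dvd:
  assumes "p \<in> QA n (scaleL e UNIV)" "e > 0"
  shows "e dvd n"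
proof -
  obtain r u where p: "p = (r,u)" by (cases p)
  have s: "(r,u) \<in> sts n" "inH2 n (r,u)" "periods n (r,u) = scaleL e UNIV" using assms p QA_def by auto
  show ?thesis
  proof (rule stretch_dvd[OF s(1,2) assms(2)])
    fix A B assume "(A,B) \<in> periods n (r,u)"
    then show "int e dvd A" using s(3) scaleL_def by auto
  qed
qed

lemma hnf_dvd:
  assumes "p \<in> QA n (hnfL a b c)" "a > 0" "c > 0" "n > 0"
  shows "a * c dvd n"
proof -
  let ?L = "hnfL a b c"
  obtain r u where pp: "p = (r,u)" by (cases p)
  have s: "(r,u) \<in> sts n" "inH2 n (r,u)" "periods n (r,u) = ?L" using assms pp QA_def by auto
  have cn: "c dvd n"
  proof (rule stretch_dvd[OF sts_swap[OF s(1)] _ assms(3)])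
    show "inH2 n (u,r)" using inH2_swap[OF s(1)] s(2) by simp
    fix A B assume "(A,B) \<in> periods n (u,r)"
    then have "(B,A) \<in> ?L" using periods_swap[OF s(1)] s(3) swapL_def by auto
    then show "int c dvd A" unfolding hnfL_def by simp
  qed
  have "sts_iso n `` {p} \<in> Q n ?L" unfolding Q_def using assms(1) by (rule quotientI)
  then have "Q n ?L \<noteq> {}" by blast
  then have "card (Q n ?L) > 0" using Q_finite by (simp add: card_gt_0_iff)
  then have "card (Q (n div c) (scaleL a UNIV)) > 0" using Q_chain1[OF assms(2,3) cn assms(4)] by simp
  then have "Q (n div c) (scaleL a UNIV) \<noteq> {}" by auto
  then obtain q where "q \<in> QA (n div c) (scaleL a UNIV)" using QA_nonempty by blast
  then have "a dvd n div c" using QA_dvd assms(2) by blast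
  then obtain t where t: "n div c = a * t" by (auto elim: dvdE)
  have "n = c * (n div c)" using cn by simp
  then have "n = (a * c) * t" using t by (simp add: algebra_simps)
  then show ?thesis by simp
qed

lemma card_Q_Lambda:
  assumes n: "n > 0" and d: "d dvd n" and L: "L \<in> Lambda d"
  shows "card (Q n L) = card (Ep (n div d))"
proof -
  have d0: "d > 0" using d n by (cases d) auto
  obtain a b c where h: "a > 0" "c > 0" "b < a" "L = hnfL a b c" "a * c = d"
    using Lambda_hnf[OF d0 L] by blast
  obtain k where k: "n = d * k" using d by (auto elim: dvdE)
  have nk: "n = c * (a * k)" using k h(5) by (simp add: algebra_simps)
  have cn: "c dvd n" using nk by simp
  have ndc: "n div c = a * k" using nk h(2) by simp
  have an: "a dvd n div c" using ndc by simp
  have "k > 0" using n k by (cases k) auto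
  then have nc: "n div c > 0" using ndc h(1) by simp
  have "card (Q n L) = card (Q (n div c) (scaleL a UNIV))" using Q_chain1[OF h(1,2) cn n] h(4) by simp
  also have "\<dots> = card (Q (n div c div a) UNIV)" by (rule Q_chain2[OF h(1) an nc])
  also have "n div c div a = n div d" using h(5) div_mult2_eq[of n c a] by (simp add: mult.commute)
  finally show ?thesis using Ep_Q by simp
qed


theorem mainTheorem9:
  fixes n :: nat
  assumes "n > 0"
  shows "\<exists>f. bij_betw f (E n) (SIGMA d:{d. d dvd n}. Ep (n div d) \<times> Lambda d)"
proof -
  let ?D = "{d. d dvd n}"
  have finD: "finite ?D" using assms by (simp add: finite_divisors_nat)
  have Dpos: "d \<in> ?D \<Longrightarrow> d > 0" for d using assms by (cases d) auto
  let ?Ls = "\<Union> (Lambda ` ?D)"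
  have finLam: "d \<in> ?D \<Longrightarrow> finite (Lambda d)" for d using Lambda_finite Dpos by blast
  have finLs: "finite ?Ls" by (rule finite_UN_I[OF finD finLam])
  have Eeq: "E n = \<Union> ((\<lambda>L. Q n L) ` ?Ls)"
  proof
    show "E n \<subseteq> \<Union> ((\<lambda>L. Q n L) ` ?Ls)"
    proof
      fix C assume "C \<in> E n"
      then obtain p where p: "p \<in> {p \<in> sts n. inH2 n p}" "C = sts_iso n `` {p}"
        unfolding E_def by (auto elim: quotientE)
      obtain r u where pp: "p = (r,u)" by (cases p)
      have s: "(r,u) \<in> sts n" "inH2 n (r,u)" using p(1) unfolding pp by simp_all
      let ?L = "periods n (r,u)"
      obtain k1 where k1: "k1 > 0" "(k1,0) \<in> ?L" using per_axes(1)[OF s] by blast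
      obtain k2 where k2: "k2 > 0" "(0,k2) \<in> ?L" using per_axes(2)[OF s] by blast
      have "\<exists>a b c. a > 0 \<and> c > 0 \<and> b < a \<and> ?L = hnfL a b c"
        by (rule hnf_exists[OF per_sublattice[OF s] k1(2) k1(1) k2(2) k2(1)])
      then obtain a b c where h: "a > 0" "c > 0" "b < a" "?L = hnfL a b c" by blast
      have pQA: "p \<in> QA n ?L" using s pp unfolding QA_def by simp
      have "a * c dvd n" using hnf_dvd[OF pQA[unfolded h(4)] h(1,2) assms] .
      moreover have "?L \<in> Lambda (a * c)" using hnf_in_Lambda[OF h(1,2)] h(4) by simp
      ultimately have "?L \<in> ?Ls" by blast
      moreover have "C \<in> Q n ?L" unfolding Q_def p(2) using pQA by (rule quotientI)
      ultimately show "C \<in> \<Union> ((\<lambda>L. Q n L) ` ?Ls)" by blast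
    qed
    show "\<Union> ((\<lambda>L. Q n L) ` ?Ls) \<subseteq> E n"
    proof
      fix C assume "C \<in> \<Union> ((\<lambda>L. Q n L) ` ?Ls)"
      then obtain L where "C \<in> Q n L" by blast
      then obtain p where p: "p \<in> QA n L" "C = sts_iso n `` {p}" unfolding Q_def by (auto elim: quotientE)
      then have "p \<in> {p \<in> sts n. inH2 n p}" unfolding QA_def by simp
      then show "C \<in> E n" unfolding E_def p(2) by (rule quotientI)
    qed
  qed
  have disj: "Q n L1 \<inter> Q n L2 = {}" if "L1 \<noteq> L2" for L1 L2
  proof (rule ccontr)
    assume "Q n L1 \<inter> Q n L2 \<noteq> {}"
    then obtain C where "C \<in> Q n L1" "C \<in> Q n L2" by blast
    then obtain p1 p2 where p: "p1 \<in> QA n L1" "C = sts_iso n `` {p1}" "p2 \<in> QA n L2" "C = sts_iso n `` {p2}"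
      unfolding Q_def by (auto elim!: quotientE)
    have "p1 \<in> sts n" "p2 \<in> sts n" using p QA_def by auto
    then have "(p1,p2) \<in> sts_iso n" using p equiv_class_eq_iff[OF equiv_iso] by metis
    then have "periods n p1 = periods n p2" by (rule iso_periods)
    then show False using p that QA_def by auto
  qed
  have "card (E n) = (\<Sum>L\<in>?Ls. card (Q n L))"
    unfolding Eeq by (rule card_UN_disjoint[OF finLs]) (auto simp: Q_finite disj)
  also have "\<dots> = (\<Sum>d\<in>?D. \<Sum>L\<in>Lambda d. card (Q n L))"
  proof (rule sum.UNION_disjoint[OF finD])
    show "\<forall>d\<in>?D. finite (Lambda d)" using finLam by blast
    show "\<forall>d1\<in>?D. \<forall>d2\<in>?D. d1 \<noteq> d2 \<longrightarrow> Lambda d1 \<inter> Lambda d2 = {}"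
      unfolding Lambda_def by auto
  qed
  also have "\<dots> = (\<Sum>d\<in>?D. \<Sum>L\<in>Lambda d. card (Ep (n div d)))"
    using card_Q_Lambda[OF assms] by (intro sum.cong refl) auto
  also have "\<dots> = (\<Sum>d\<in>?D. card (Ep (n div d) \<times> Lambda d))"
    by (intro sum.cong refl) (simp add: card_cartesian_product mult.commute)
  also have "\<dots> = card (SIGMA d:?D. Ep (n div d) \<times> Lambda d)"
    using finD finLam by (subst card_SigmaI) (auto simp: Ep_Q Q_finite)
  finally have cardeq: "card (E n) = card (SIGMA d:?D. Ep (n div d) \<times> Lambda d)" .
  have finT: "finite (SIGMA d:?D. Ep (n div d) \<times> Lambda d)"
    using finD finLam by (auto simp: Ep_Q Q_finite intro!: finite_SigmaI)
  show ?thesis by (rule finite_same_card_bij[OF E_finite finT cardeq])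
qed


end
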